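(* In the setting described in the context, for every node $p\in\mathcal{V}_h^C\cup\mathcal{M}_h^C$ with $u^h_1(p)\neq0$ (a non actual contact node), $$\langle\lambda^h,\phi_pe_1\rangle_h=0.$$
   Context: Let $\Omega\subset\mathbb{R}^2$ be a bounded polygonal Lipschitz domain with boundary partitioned into relatively open, pairwise disjoint parts $\Gamma_D,\Gamma_N,\Gamma_C$, $\mathrm{meas}(\Gamma_D)>0$, $\overline{\Gamma_C}\subset\partial\Omega\setminus\overline{\Gamma_D}$, outward unit normal on $\Gamma_C$ equal to $e_1=(1,0)$. Let $\sigma(v)=\chi\,\mathrm{tr}(\epsilon(v))I+2\mu\epsilon(v)$ ($\chi,\mu>0$, $\epsilon(v)=\frac12(\nabla v+\nabla v^T)$), $a(w,v)=\int_\Omega\sigma(w):\epsilon(v)\,dx$, $L(v)=\int_\Omega f\cdot v\,dx+\int_{\Gamma_N}g\cdot v\,ds$, $f\in[L^2(\Omega)]^2$, $g\in[L^2(\Gamma_N)]^2$. Let $\mathcal{T}_h$ be a regular triangulation of $\Omega$ (each of $\Gamma_D,\Gamma_N,\Gamma_C$ a union of mesh edges); $\mathcal{V}_h,\mathcal{M}_h$ vertices and edge midpoints; $\mathcal{V}_h^C$ vertices in $\overline{\Gamma_C}$, $\mathcal{M}_h^C$ midpoints of edges on $\Gamma_C$; $\mathcal{V}_h^D,\mathcal{M}_h^D$ analogously for $\Gamma_D$; $\mathcal{V}_h^o=\mathcal{V}_h\setminus\mathcal{V}_h^D$, $\mathcal{M}_h^o=\mathcal{M}_h\setminus\mathcal{M}_h^D$.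 $V^h=\{v\in[C(\overline\Omega)]^2: v|_T\in[P_2(T)]^2,\ v=0\text{ on }\Gamma_D\}$ with scalar quadratic Lagrange basis $\psi_z$, $z\in\mathcal{V}_h^o\cup\mathcal{M}_h^o$. $\mathcal{K}^h=\{v^h=(v^h_1,v^h_2)\in V^h: v^h_1(z)\le0\ \forall z\in\mathcal{V}_h^C\cup\mathcal{M}_h^C\}$; $u^h=(u^h_1,u^h_2)\in\mathcal{K}^h$ solves $a(u^h,v^h-u^h)\ge L(v^h-u^h)$ $\forall v^h\in\mathcal{K}^h$. $Q^h$ = continuous $\mathbb{R}^2$-valued functions on $\overline{\Gamma_C}$ affine on each half of each contact edge (edges split at midpoints), scalar nodal basis $\phi_z$, $z\in\mathcal{V}_h^C\cup\mathcal{M}_h^C$. $\omega_z$ = union of elements sharing $z$, $\gamma_{z,C}=\partial\omega_z\cap\Gamma_C$. $\pi_h v=\sum_{z\in\mathcal{V}_h^C\cup\mathcal{M}_h^C}\sum_iv_i(z)\psi_ze_i$; $\langle w,v\rangle_h=\sum_{z\in\mathcal{V}_h^C\cup\mathcal{M}_h^C}w(z)\cdot v(z)\int_{\gamma_{z,C}}\phi_z\,ds$; $\lambda^h\in Q^h$ defined by $\langle\lambda^h,v^h\rangle_h=L(\pi_hv^h)-a(u^h,\pi_hv^h)$ for all $v^h\in Q^h$. *)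

theory Defs
  imports "HOL-Analysis.Analysis"
begin

type_synonym pt = "real^2"

definition lipschitz_domain :: "pt set \<Rightarrow> bool" where
  "lipschitz_domain \<Omega> \<longleftrightarrow> open \<Omega> \<and> bounded \<Omega> \<and> connected \<Omega> \<and> \<Omega> \<noteq> {} \<and>
     (\<forall>x\<in>frontier \<Omega>. \<exists>r>0. \<exists>R::pt \<Rightarrow> pt. \<exists>\<phi>::real \<Rightarrow> real. \<exists>K::real.
        orthogonal_transformation R \<and> (\<forall>s t. \<bar>\<phi> s - \<phi> t\<bar> \<le> K * \<bar>s - t\<bar>) \<and>
        ball x r \<inter> \<Omega> = {y \<in> ball x r. R (y - x) $ 2 < \<phi> (R (y - x) $ 1)})"

definition is_triangle :: "pt set \<Rightarrow> bool" where
  "is_triangle T \<longleftrightarrow> (\<exists>a b c. \<not> collinear {a, b, c} \<and> T = convex hull {a, b, c})"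

definition tri_verts :: "pt set \<Rightarrow> pt set" where
  "tri_verts T = {v. v extreme_point_of T}"

definition tri_edges :: "pt set \<Rightarrow> pt set set" where
  "tri_edges T = {closed_segment a b | a b. a \<in> tri_verts T \<and> b \<in> tri_verts T \<and> a \<noteq> b}"

definition mesh_verts :: "pt set set \<Rightarrow> pt set" where
  "mesh_verts \<T> = (\<Union>T\<in>\<T>. tri_verts T)"

definition mesh_edges :: "pt set set \<Rightarrow> pt set set" where
  "mesh_edges \<T> = (\<Union>T\<in>\<T>. tri_edges T)"

definition mesh_mids :: "pt set set \<Rightarrow> pt set" where
  "mesh_mids \<T> = {midpoint a b | a b. a \<noteq> b \<and> closed_segment a b \<in> mesh_edges \<T>}"

definition regular_triangulation :: "pt set \<Rightarrow> pt set set \<Rightarrow> bool" where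
  "regular_triangulation \<Omega> \<T> \<longleftrightarrow> finite \<T> \<and> (\<forall>T\<in>\<T>. is_triangle T) \<and>
     \<Union>\<T> = closure \<Omega> \<and>
     (\<forall>T\<in>\<T>. \<forall>T'\<in>\<T>. T \<noteq> T' \<longrightarrow>
        T \<inter> T' = {} \<or>
        (\<exists>v. v \<in> tri_verts T \<and> v \<in> tri_verts T' \<and> T \<inter> T' = {v}) \<or>
        (\<exists>e. e \<in> tri_edges T \<and> e \<in> tri_edges T' \<and> T \<inter> T' = e))"

definition bdry_edges :: "pt set \<Rightarrow> pt set set \<Rightarrow> pt set set" where
  "bdry_edges \<Omega> \<T> = {e \<in> mesh_edges \<T>. e \<subseteq> frontier \<Omega>}"

definition edge_ends :: "pt set \<Rightarrow> pt \<times> pt" where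
  "edge_ends e = (SOME (a, b). a \<noteq> b \<and> e = closed_segment a b)"

definition edge_param :: "pt set \<Rightarrow> real \<Rightarrow> pt" where
  "edge_param e t = (let (a, b) = edge_ends e in a + t *\<^sub>R (b - a))"

definition edge_len :: "pt set \<Rightarrow> real" where
  "edge_len e = (let (a, b) = edge_ends e in dist a b)"

definition edge_int :: "pt set \<Rightarrow> (pt \<Rightarrow> real) \<Rightarrow> real" where
  "edge_int e h = edge_len e * (LINT t|lebesgue_on {0..1}. h (edge_param e t))"

definition line_int :: "pt set \<Rightarrow> pt set set \<Rightarrow> pt set \<Rightarrow> (pt \<Rightarrow> real) \<Rightarrow> real" where
  "line_int \<Omega> \<T> S h = (\<Sum>e\<in>bdry_edges \<Omega> \<T>. edge_int e (\<lambda>x. indicator S x * h x))"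

definition bdry_meas :: "pt set \<Rightarrow> pt set set \<Rightarrow> pt set \<Rightarrow> real" where
  "bdry_meas \<Omega> \<T> S = line_int \<Omega> \<T> S (\<lambda>_. 1)"

definition setting :: "pt set \<Rightarrow> pt set set \<Rightarrow> pt set \<Rightarrow> pt set \<Rightarrow> pt set \<Rightarrow> bool" where
  "setting \<Omega> \<T> \<Gamma>D \<Gamma>N \<Gamma>C \<longleftrightarrow>
     lipschitz_domain \<Omega> \<and> regular_triangulation \<Omega> \<T> \<and>
     openin (top_of_set (frontier \<Omega>)) \<Gamma>D \<and>
     openin (top_of_set (frontier \<Omega>)) \<Gamma>N \<and>
     openin (top_of_set (frontier \<Omega>)) \<Gamma>C \<and>
     \<Gamma>D \<inter> \<Gamma>N = {} \<and> \<Gamma>D \<inter> \<Gamma>C = {} \<and> \<Gamma>N \<inter> \<Gamma>C = {} \<and>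
     frontier \<Omega> = closure \<Gamma>D \<union> closure \<Gamma>N \<union> closure \<Gamma>C \<and>
     bdry_meas \<Omega> \<T> \<Gamma>D > 0 \<and>
     closure \<Gamma>C \<subseteq> frontier \<Omega> - closure \<Gamma>D \<and>
     \<comment> \<open>outward unit normal on \<Gamma>C equals e1\<close>
     (\<forall>x\<in>\<Gamma>C. \<exists>r>0. ball x r \<inter> \<Omega> = {y \<in> ball x r. y $ 1 < x $ 1}) \<and>
     \<comment> \<open>each boundary part is a union of mesh edges\<close>
     (\<exists>E\<subseteq>mesh_edges \<T>. closure \<Gamma>D = \<Union>E) \<and>
     (\<exists>E\<subseteq>mesh_edges \<T>. closure \<Gamma>N = \<Union>E) \<and>
     (\<exists>E\<subseteq>mesh_edges \<T>. closure \<Gamma>C = \<Union>E)"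

definition contact_edges :: "pt set set \<Rightarrow> pt set \<Rightarrow> pt set set" where
  "contact_edges \<T> \<Gamma>C = {e \<in> mesh_edges \<T>. e \<subseteq> closure \<Gamma>C}"

definition contact_nodes :: "pt set set \<Rightarrow> pt set \<Rightarrow> pt set" where
  "contact_nodes \<T> \<Gamma>C = (mesh_verts \<T> \<inter> closure \<Gamma>C) \<union>
     {midpoint a b | a b. a \<noteq> b \<and> closed_segment a b \<in> contact_edges \<T> \<Gamma>C}"

definition half_edges :: "pt set set \<Rightarrow> pt set \<Rightarrow> pt set set" where
  "half_edges \<T> \<Gamma>C = {closed_segment a (midpoint a b) | a b.
      a \<noteq> b \<and> closed_segment a b \<in> contact_edges \<T> \<Gamma>C}"

definition quad_on :: "pt set \<Rightarrow> (pt \<Rightarrow> real) \<Rightarrow> bool" where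
  "quad_on T f \<longleftrightarrow> (\<exists>c0 c1 c2 c3 c4 c5. \<forall>x\<in>T.
     f x = c0 + c1 * x$1 + c2 * x$2 + c3 * (x$1)\<^sup>2 + c4 * (x$1 * x$2) + c5 * (x$2)\<^sup>2)"

definition aff_on :: "pt set \<Rightarrow> (pt \<Rightarrow> real) \<Rightarrow> bool" where
  "aff_on S f \<longleftrightarrow> (\<exists>c0 c1 c2. \<forall>x\<in>S. f x = c0 + c1 * x$1 + c2 * x$2)"

text \<open>The space V^h (values outside the closure of \<Omega> are irrelevant).\<close>
definition Vh :: "pt set \<Rightarrow> pt set set \<Rightarrow> pt set \<Rightarrow> (pt \<Rightarrow> pt) \<Rightarrow> bool" where
  "Vh \<Omega> \<T> \<Gamma>D v \<longleftrightarrow> continuous_on (closure \<Omega>) v \<and>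
     (\<forall>T\<in>\<T>. \<forall>i. quad_on T (\<lambda>x. v x $ i)) \<and> (\<forall>x\<in>\<Gamma>D. v x = 0)"

definition Kh :: "pt set \<Rightarrow> pt set set \<Rightarrow> pt set \<Rightarrow> pt set \<Rightarrow> (pt \<Rightarrow> pt) \<Rightarrow> bool" where
  "Kh \<Omega> \<T> \<Gamma>D \<Gamma>C v \<longleftrightarrow> Vh \<Omega> \<T> \<Gamma>D v \<and> (\<forall>z\<in>contact_nodes \<T> \<Gamma>C. v z $ 1 \<le> 0)"

definition psi :: "pt set \<Rightarrow> pt set set \<Rightarrow> pt \<Rightarrow> pt \<Rightarrow> real" where
  "psi \<Omega> \<T> z = (THE f. continuous_on (closure \<Omega>) f \<and> (\<forall>T\<in>\<T>. quad_on T f) \<and>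
      (\<forall>y\<in>mesh_verts \<T> \<union> mesh_mids \<T>. f y = (if y = z then 1 else 0)) \<and>
      (\<forall>x. x \<notin> closure \<Omega> \<longrightarrow> f x = 0))"

definition Qh :: "pt set set \<Rightarrow> pt set \<Rightarrow> (pt \<Rightarrow> pt) \<Rightarrow> bool" where
  "Qh \<T> \<Gamma>C w \<longleftrightarrow> continuous_on (closure \<Gamma>C) w \<and>
     (\<forall>S\<in>half_edges \<T> \<Gamma>C. \<forall>i. aff_on S (\<lambda>x. w x $ i))"

definition phi :: "pt set set \<Rightarrow> pt set \<Rightarrow> pt \<Rightarrow> pt \<Rightarrow> real" where
  "phi \<T> \<Gamma>C z = (THE f. continuous_on (closure \<Gamma>C) f \<and> (\<forall>S\<in>half_edges \<T> \<Gamma>C. aff_on S f) \<and>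
      (\<forall>y\<in>contact_nodes \<T> \<Gamma>C. f y = (if y = z then 1 else 0)) \<and>
      (\<forall>x. x \<notin> closure \<Gamma>C \<longrightarrow> f x = 0))"

definition omega :: "pt set set \<Rightarrow> pt \<Rightarrow> pt set" where
  "omega \<T> z = \<Union>{T \<in> \<T>. z \<in> T}"

definition gammaC :: "pt set set \<Rightarrow> pt set \<Rightarrow> pt \<Rightarrow> pt set" where
  "gammaC \<T> \<Gamma>C z = frontier (omega \<T> z) \<inter> \<Gamma>C"

definition pi_h :: "pt set \<Rightarrow> pt set set \<Rightarrow> pt set \<Rightarrow> (pt \<Rightarrow> pt) \<Rightarrow> pt \<Rightarrow> pt" where
  "pi_h \<Omega> \<T> \<Gamma>C v = (\<lambda>x. \<Sum>z\<in>contact_nodes \<T> \<Gamma>C. (\<Sum>i\<in>UNIV. (v z $ i * psi \<Omega> \<T> z x) *\<^sub>R axis i 1))"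

definition dpair :: "pt set \<Rightarrow> pt set set \<Rightarrow> pt set \<Rightarrow> (pt \<Rightarrow> pt) \<Rightarrow> (pt \<Rightarrow> pt) \<Rightarrow> real" where
  "dpair \<Omega> \<T> \<Gamma>C w v = (\<Sum>z\<in>contact_nodes \<T> \<Gamma>C.
      (w z \<bullet> v z) * line_int \<Omega> \<T> (gammaC \<T> \<Gamma>C z) (phi \<T> \<Gamma>C z))"

text \<open>Pointwise derivative (set to 0 where v is not differentiable; such points form a
  null set for piecewise polynomial v).\<close>
definition Dv :: "(pt \<Rightarrow> pt) \<Rightarrow> pt \<Rightarrow> pt \<Rightarrow> pt" where
  "Dv v x = (if v differentiable (at x) then frechet_derivative v (at x) else (\<lambda>_. 0))"

definition pd :: "(pt \<Rightarrow> pt) \<Rightarrow> 2 \<Rightarrow> 2 \<Rightarrow> pt \<Rightarrow> real" where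
  "pd v i j x = Dv v x (axis j 1) $ i"

definition strain :: "(pt \<Rightarrow> pt) \<Rightarrow> 2 \<Rightarrow> 2 \<Rightarrow> pt \<Rightarrow> real" where
  "strain v i j x = (pd v i j x + pd v j i x) / 2"

definition stress :: "real \<Rightarrow> real \<Rightarrow> (pt \<Rightarrow> pt) \<Rightarrow> 2 \<Rightarrow> 2 \<Rightarrow> pt \<Rightarrow> real" where
  "stress chi mu v i j x = chi * (strain v 1 1 x + strain v 2 2 x) * (if i = j then 1 else 0)
      + 2 * mu * strain v i j x"

definition aform :: "pt set \<Rightarrow> real \<Rightarrow> real \<Rightarrow> (pt \<Rightarrow> pt) \<Rightarrow> (pt \<Rightarrow> pt) \<Rightarrow> real" where
  "aform \<Omega> chi mu w v = (LINT x|lebesgue_on \<Omega>.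
      (\<Sum>i\<in>UNIV. (\<Sum>j\<in>UNIV. stress chi mu w i j x * strain v i j x)))"

definition Lform :: "pt set \<Rightarrow> pt set set \<Rightarrow> pt set \<Rightarrow> (pt \<Rightarrow> pt) \<Rightarrow> (pt \<Rightarrow> pt) \<Rightarrow> (pt \<Rightarrow> pt) \<Rightarrow> real" where
  "Lform \<Omega> \<T> \<Gamma>N f g v = (LINT x|lebesgue_on \<Omega>. f x \<bullet> v x) + line_int \<Omega> \<T> \<Gamma>N (\<lambda>x. g x \<bullet> v x)"

definition L2_dom :: "pt set \<Rightarrow> (pt \<Rightarrow> pt) \<Rightarrow> bool" where
  "L2_dom \<Omega> f \<longleftrightarrow> f \<in> borel_measurable (lebesgue_on \<Omega>) \<and>
     integrable (lebesgue_on \<Omega>) (\<lambda>x. (norm (f x))\<^sup>2)"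

definition L2_bdry :: "pt set \<Rightarrow> pt set set \<Rightarrow> pt set \<Rightarrow> (pt \<Rightarrow> pt) \<Rightarrow> bool" where
  "L2_bdry \<Omega> \<T> \<Gamma> g \<longleftrightarrow> (\<forall>e\<in>bdry_edges \<Omega> \<T>. e \<subseteq> closure \<Gamma> \<longrightarrow>
     (\<lambda>t. g (edge_param e t)) \<in> borel_measurable (lebesgue_on {0..1}) \<and>
     integrable (lebesgue_on {0..1}) (\<lambda>t. (norm (g (edge_param e t)))\<^sup>2))"

end

theory Submission
  imports Defs
begin

definition qp :: "(pt \<Rightarrow> real) \<Rightarrow> bool" where
  "qp P \<longleftrightarrow> (\<exists>c0 c1 c2 c3 c4 c5. \<forall>x. P x = c0 + c1 * x$1 + c2 * x$2 + c3 * (x$1)\<^sup>2 + c4 * (x$1 * x$2) + c5 * (x$2)\<^sup>2)"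

definition af :: "(pt \<Rightarrow> real) \<Rightarrow> bool" where
  "af A \<longleftrightarrow> (\<exists>c0 c1 c2. \<forall>x. A x = c0 + c1 * x$1 + c2 * x$2)"

lemma inner2: "(x::pt) \<bullet> y = x$1 * y$1 + x$2 * y$2"
  by (simp add: inner_vec_def sum_2)

lemma mid_param: "midpoint (a::pt) b = a + (1/2) *\<^sub>R (b - a)"
  by (rule vec_eq_iff[THEN iffD2]) (simp add: midpoint_def field_simps)

lemma qp_add: "qp P \<Longrightarrow> qp Q \<Longrightarrow> qp (\<lambda>x. P x + Q x)"
proof -
  assume "qp P" "qp Q"
  then obtain a0 a1 a2 a3 a4 a5 b0 b1 b2 b3 b4 b5 where
    "\<forall>x. P x = a0 + a1 * x$1 + a2 * x$2 + a3 * (x$1)\<^sup>2 + a4 * (x$1 * x$2) + a5 * (x$2)\<^sup>2"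
    "\<forall>x. Q x = b0 + b1 * x$1 + b2 * x$2 + b3 * (x$1)\<^sup>2 + b4 * (x$1 * x$2) + b5 * (x$2)\<^sup>2"
    unfolding qp_def by metis
  then show ?thesis unfolding qp_def
    by (intro exI[of _ "a0+b0"] exI[of _ "a1+b1"] exI[of _ "a2+b2"] exI[of _ "a3+b3"]
        exI[of _ "a4+b4"] exI[of _ "a5+b5"]) (simp add: algebra_simps)
qed

lemma qp_cmul: "qp P \<Longrightarrow> qp (\<lambda>x. k * P x)"
proof -
  assume "qp P"
  then obtain a0 a1 a2 a3 a4 a5 where
    "\<forall>x. P x = a0 + a1 * x$1 + a2 * x$2 + a3 * (x$1)\<^sup>2 + a4 * (x$1 * x$2) + a5 * (x$2)\<^sup>2"
    unfolding qp_def by metis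
  then show ?thesis unfolding qp_def
    by (intro exI[of _ "k*a0"] exI[of _ "k*a1"] exI[of _ "k*a2"] exI[of _ "k*a3"]
        exI[of _ "k*a4"] exI[of _ "k*a5"]) (simp add: algebra_simps)
qed

lemma qp_diff: "qp P \<Longrightarrow> qp Q \<Longrightarrow> qp (\<lambda>x. P x - Q x)"
  using qp_add[of P "\<lambda>x. (-1) * Q x"] qp_cmul[of Q "-1"] by simp

lemma qp_const: "qp (\<lambda>x. k)"
  unfolding qp_def by (intro exI[of _ k] exI[of _ 0]) auto

lemma qp_afmul: "af A \<Longrightarrow> af B \<Longrightarrow> qp (\<lambda>x. A x * B x)"
proof -
  assume "af A" "af B"
  then obtain a0 a1 a2 b0 b1 b2 where
    "\<forall>x. A x = a0 + a1 * x$1 + a2 * x$2" "\<forall>x. B x = b0 + b1 * x$1 + b2 * x$2"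
    unfolding af_def by metis
  then show ?thesis unfolding qp_def
    by (intro exI[of _ "a0*b0"] exI[of _ "a0*b1+a1*b0"] exI[of _ "a0*b2+a2*b0"] exI[of _ "a1*b1"]
        exI[of _ "a1*b2+a2*b1"] exI[of _ "a2*b2"]) (simp add: algebra_simps power2_eq_square)
qed

lemma af_const: "af (\<lambda>x. k)"
  unfolding af_def by (intro exI[of _ k] exI[of _ 0]) auto

lemma af_qp: "af A \<Longrightarrow> qp A"
  using qp_afmul[of A "\<lambda>x. 1"] af_const[of 1] by simp

lemma af_add: "af A \<Longrightarrow> af B \<Longrightarrow> af (\<lambda>x. A x + B x)"
proof -
  assume "af A" "af B"
  then obtain a0 a1 a2 b0 b1 b2 where
    "\<forall>x. A x = a0 + a1 * x$1 + a2 * x$2" "\<forall>x. B x = b0 + b1 * x$1 + b2 * x$2"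
    unfolding af_def by metis
  then show ?thesis unfolding af_def
    by (intro exI[of _ "a0+b0"] exI[of _ "a1+b1"] exI[of _ "a2+b2"]) (simp add: algebra_simps)
qed

lemma af_cmul: "af A \<Longrightarrow> af (\<lambda>x. k * A x)"
proof -
  assume "af A"
  then obtain a0 a1 a2 where
    "\<forall>x. A x = a0 + a1 * x$1 + a2 * x$2"
    unfolding af_def by metis
  then show ?thesis unfolding af_def
    by (intro exI[of _ "k*a0"] exI[of _ "k*a1"] exI[of _ "k*a2"]) (simp add: algebra_simps)
qed

lemma af_inner: "af (\<lambda>x. (x - a) \<bullet> w)"
  unfolding af_def inner2
  by (rule exI[of _ "- a$1 * w$1 - a$2*w$2"], rule exI[of _ "w$1"], rule exI[of _ "w$2"]) (simp add: algebra_simps)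

lemma af_mid: "af A \<Longrightarrow> A (midpoint a b) = (A a + A b) / 2"
  unfolding af_def midpoint_def by (auto simp: algebra_simps)

lemma af_seg: "af A \<Longrightarrow> A (a + t *\<^sub>R (b - a)) = A a + t * (A b - A a)"
  unfolding af_def by (auto simp: algebra_simps)

lemma qp_param: "qp P \<Longrightarrow> \<exists>d0 d1 d2 d3 d4 d5. \<forall>s t. P (a + s *\<^sub>R u + t *\<^sub>R w) =
    d0 + d1 * s + d2 * t + d3 * s\<^sup>2 + d4 * (s * t) + d5 * t\<^sup>2"
proof -
  assume "qp P"
  then obtain c0 c1 c2 c3 c4 c5 where c:
    "\<forall>x. P x = c0 + c1 * x$1 + c2 * x$2 + c3 * (x$1)\<^sup>2 + c4 * (x$1 * x$2) + c5 * (x$2)\<^sup>2"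
    unfolding qp_def by metis
  show ?thesis
    apply (rule exI[of _ "P a"])
    apply (rule exI[of _ "c1*u$1 + c2*u$2 + 2*c3*a$1*u$1 + c4*(a$1*u$2 + u$1*a$2) + 2*c5*a$2*u$2"])
    apply (rule exI[of _ "c1*w$1 + c2*w$2 + 2*c3*a$1*w$1 + c4*(a$1*w$2 + w$1*a$2) + 2*c5*a$2*w$2"])
    apply (rule exI[of _ "c3*u$1*u$1 + c4*u$1*u$2 + c5*u$2*u$2"])
    apply (rule exI[of _ "2*c3*u$1*w$1 + c4*(u$1*w$2 + w$1*u$2) + 2*c5*u$2*w$2"])
    apply (rule exI[of _ "c3*w$1*w$1 + c4*w$1*w$2 + c5*w$2*w$2"])
    apply (simp add: c algebra_simps power2_eq_square)
    done
qed

lemma qp_seg_zero: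
  assumes "qp P" "P a = 0" "P b = 0" "P (midpoint a b) = 0" "x \<in> closed_segment a b"
  shows "P x = 0"
proof -
  obtain d0 d1 d2 d3 d4 d5 where d: "\<And>s t. P (a + s *\<^sub>R (b - a) + t *\<^sub>R 0) =
    d0 + d1 * s + d2 * t + d3 * s\<^sup>2 + d4 * (s * t) + d5 * t\<^sup>2"
    using qp_param[OF assms(1), of a "b - a" 0] by blast
  have e: "\<And>s. P (a + s *\<^sub>R (b - a)) = d0 + d1 * s + d3 * s\<^sup>2"
    using d[of _ 0] by simp
  have "midpoint a b = a + (1/2) *\<^sub>R (b - a)" by (simp add: mid_param)
  then have "d0 + d1/2 + d3/4 = 0" using e[of "1/2"] assms(4) by (simp add: power2_eq_square)
  moreover have "d0 = 0" using e[of 0] assms(2) by simp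
  moreover have "d0 + d1 + d3 = 0" using e[of 1] assms(3) by simp
  ultimately have z: "d0 = 0" "d1 = 0" "d3 = 0" by linarith+
  obtain u where "x = (1 - u) *\<^sub>R a + u *\<^sub>R b" using assms(5) unfolding closed_segment_def by auto
  then have "x = a + u *\<^sub>R (b - a)" by (simp add: algebra_simps)
  then show ?thesis using e[of u] z by simp
qed

lemma seg_param: "x \<in> closed_segment a b \<longleftrightarrow> (\<exists>u. 0 \<le> u \<and> u \<le> 1 \<and> x = a + u *\<^sub>R (b - a))"
  unfolding closed_segment_def by (auto simp: algebra_simps)

lemma col_perm: "collinear {a,b,c} \<longleftrightarrow> collinear {b,a,c}" "collinear {a,b,c} \<longleftrightarrow> collinear {a,c,b}"
  by (simp_all add: insert_commute)

lemma col_of_mult: "b - a = k *\<^sub>R (c - a) \<Longrightarrow> collinear {a, b, (c::pt)}"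
proof -
  assume h: "b - a = k *\<^sub>R (c - a)"
  have "collinear {0, c - a, b - a}" using h collinear_lemma[of "c - a" "b - a"] by auto
  moreover have "collinear {c, a, b} \<longleftrightarrow> collinear {0, c - a, b - a}"
    by (rule collinear_3) simp
  ultimately show ?thesis by (simp add: insert_commute)
qed

lemma seg_inter_vertex:
  assumes nc: "\<not> collinear {a, b, c::pt}" and x1: "x \<in> closed_segment a b" and x2: "x \<in> closed_segment a c"
  shows "x = a"
proof -
  obtain s where s: "0 \<le> s" "s \<le> 1" "x = a + s *\<^sub>R (b - a)" using x1 seg_param by metis
  obtain t where t: "0 \<le> t" "t \<le> 1" "x = a + t *\<^sub>R (c - a)" using x2 seg_param by metis
  show ?thesis
  proof (cases "s = 0")
    case True then show ?thesis using s by simp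
  next
    case False
    have "s *\<^sub>R (b - a) = t *\<^sub>R (c - a)" using s t by simp
    then have "b - a = (t / s) *\<^sub>R (c - a)" using False
      by (metis (no_types, lifting) divide_inverse_commute inverse_eq_divide scaleR_scaleR
          right_inverse scaleR_one)
    then have "collinear {a, b, c}" by (rule col_of_mult)
    then show ?thesis using nc by simp
  qed
qed

lemma vertex_not_in_seg:
  assumes nc: "\<not> collinear {a, b, c::pt}" shows "c \<notin> closed_segment a b"
proof
  assume "c \<in> closed_segment a b"
  then obtain s where s: "c = a + s *\<^sub>R (b - a)" using seg_param by metis
  then have "c - a = s *\<^sub>R (b - a)" by simp
  then have "collinear {a, c, b}" by (rule col_of_mult)
  then show False using nc by (simp add: insert_commute)
qed

lemma noncol_distinct: assumes nc: "\<not> collinear {a, b, c::pt}" shows "a \<noteq> b \<and> b \<noteq> c \<and> a \<noteq> c"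
proof (intro conjI)
  show "a \<noteq> b" proof assume "a = b" then have "{a,b,c} = {b,c}" by auto then show False using nc collinear_2 by metis qed
  show "b \<noteq> c" proof assume "b = c" then have "{a,b,c} = {a,b}" by auto then show False using nc collinear_2 by metis qed
  show "a \<noteq> c" proof assume "a = c" then have "{a,b,c} = {b,c}" by auto then show False using nc collinear_2 by metis qed
qed

lemma tri_verts_3: "\<not> collinear {a, b, c::pt} \<Longrightarrow> tri_verts (convex hull {a, b, c}) = {a, b, c}"
proof -
  assume nc: "\<not> collinear {a, b, c::pt}"
  then have "\<not> affine_dependent {a,b,c}" using collinear_3_eq_affine_dependent by blast
  then show ?thesis by (auto simp: tri_verts_def extreme_point_of_convex_hull_affine_independent)
qed

definition cr :: "pt \<Rightarrow> pt \<Rightarrow> real" where "cr x y = x$1 * y$2 - x$2 * y$1"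

lemma cr0_1: "p$1 * q$2 - p$2 * q$1 = 0 \<Longrightarrow> p$1 \<noteq> 0 \<Longrightarrow> q = (q$1 / p$1) *\<^sub>R (p::pt)"
  unfolding vec_eq_iff forall_2 by (simp add: field_simps)

lemma cr0_2: "p$1 * q$2 - p$2 * q$1 = 0 \<Longrightarrow> p$2 \<noteq> 0 \<Longrightarrow> q = (q$2 / p$2) *\<^sub>R (p::pt)"
  unfolding vec_eq_iff forall_2 by (simp add: field_simps)

lemma noncol_cr:
  assumes nc: "\<not> collinear {a, b, c::pt}" shows "cr (a - b) (c - b) \<noteq> 0"
proof
  assume h: "cr (a - b) (c - b) = 0"
  have ab: "a \<noteq> b" using noncol_distinct[OF nc] by simp
  then have "(a - b) $ 1 \<noteq> 0 \<or> (a - b) $ 2 \<noteq> 0" by (simp add: vec_eq_iff forall_2)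
  then obtain k where "c - b = k *\<^sub>R (a - b)"
    using cr0_1[of "a - b" "c - b"] cr0_2[of "a - b" "c - b"] h unfolding cr_def by blast
  then have "collinear {b, c, a}" by (rule col_of_mult)
  then show False using nc by (simp add: insert_commute)
qed

lemma bary:
  assumes nc: "\<not> collinear {a, b, c::pt}"
  shows "\<exists>L. af L \<and> L a = 1 \<and> L b = 0 \<and> L c = 0"
proof -
  define D where "D = cr (a - b) (c - b)"
  have D: "D \<noteq> 0" using noncol_cr[OF nc] D_def by simp
  define L where "L x = (1 / D) * ((x - b) $ 1 * (c - b) $ 2 - (x - b) $ 2 * (c - b) $ 1)" for x
  have "af L" unfolding L_def af_def
    by (intro exI[of _ "(1/D) * (- b$1 * (c - b) $ 2 + b$2 * (c - b) $ 1)"] exI[of _ "(1/D) * (c - b) $ 2"]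
      exI[of _ "- (1/D) * (c - b) $ 1"]) (simp add: algebra_simps)
  moreover have "L a = 1" using D unfolding L_def D_def cr_def by simp
  moreover have "L b = 0" "L c = 0" unfolding L_def by (simp_all add: algebra_simps)
  ultimately show ?thesis by blast
qed

lemma tri_interp:
  assumes nc: "\<not> collinear {a, b, c::pt}"
  shows "\<exists>P. qp P \<and> P a = \<delta> a \<and> P b = \<delta> b \<and> P c = \<delta> c \<and> P (midpoint a b) = \<delta> (midpoint a b)
     \<and> P (midpoint b c) = \<delta> (midpoint b c) \<and> P (midpoint a c) = \<delta> (midpoint a c)"
proof -
  have nc2: "\<not> collinear {b, c, a}" "\<not> collinear {c, a, b}" using nc by (simp_all add: insert_commute)
  obtain La where La: "af La" "La a = 1" "La b = 0" "La c = 0" using bary[OF nc] by blast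
  obtain Lb where Lb: "af Lb" "Lb b = 1" "Lb c = 0" "Lb a = 0" using bary[OF nc2(1)] by blast
  obtain Lc where Lc: "af Lc" "Lc c = 1" "Lc a = 0" "Lc b = 0" using bary[OF nc2(2)] by blast
  define P where "P x = \<delta> a * (2 * (La x * La x) - La x) + \<delta> b * (2 * (Lb x * Lb x) - Lb x)
     + \<delta> c * (2 * (Lc x * Lc x) - Lc x) + 4 * \<delta> (midpoint a b) * (La x * Lb x)
     + 4 * \<delta> (midpoint b c) * (Lb x * Lc x) + 4 * \<delta> (midpoint a c) * (La x * Lc x)" for x
  have q: "\<And>A. af A \<Longrightarrow> qp (\<lambda>x. 2 * (A x * A x) - A x)"
    by (intro qp_diff qp_cmul qp_afmul af_qp) auto
  have "qp P" unfolding P_def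
    by (intro qp_add qp_cmul q qp_afmul La Lb Lc)
  moreover have "P a = \<delta> a \<and> P b = \<delta> b \<and> P c = \<delta> c \<and> P (midpoint a b) = \<delta> (midpoint a b)
     \<and> P (midpoint b c) = \<delta> (midpoint b c) \<and> P (midpoint a c) = \<delta> (midpoint a c)"
  proof -
    have m: "La (midpoint a b) = 1/2" "Lb (midpoint a b) = 1/2" "Lc (midpoint a b) = 0"
       "La (midpoint b c) = 0" "Lb (midpoint b c) = 1/2" "Lc (midpoint b c) = 1/2"
       "La (midpoint a c) = 1/2" "Lb (midpoint a c) = 0" "Lc (midpoint a c) = 1/2"
      by (simp_all add: La Lb Lc af_mid[OF La(1)] af_mid[OF Lb(1)] af_mid[OF Lc(1)])
    show ?thesis unfolding P_def m La(2-4) Lb(2-4) Lc(2-4) by simp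
  qed
  ultimately show ?thesis by blast
qed

lemma tri_unisolv:
  assumes nc: "\<not> collinear {a, b, c::pt}" and P: "qp P"
    and z: "P a = 0" "P b = 0" "P c = 0" "P (midpoint a b) = 0" "P (midpoint b c) = 0" "P (midpoint a c) = 0"
    and x: "x \<in> convex hull {a, b, c}"
  shows "P x = 0"
proof -
  obtain d0 d1 d2 d3 d4 d5 where d: "\<And>s t. P (a + s *\<^sub>R (b - a) + t *\<^sub>R (c - a)) =
    d0 + d1 * s + d2 * t + d3 * s\<^sup>2 + d4 * (s * t) + d5 * t\<^sup>2"
    using qp_param[OF P, of a "b - a" "c - a"] by blast
  have e1: "P a = d0" using d[of 0 0] by simp
  have e2: "P b = d0 + d1 + d3" using d[of 1 0] by simp
  have e3: "P c = d0 + d2 + d5" using d[of 0 1] by simp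
  have m1: "midpoint a b = a + (1/2) *\<^sub>R (b - a) + 0 *\<^sub>R (c - a)" by (simp add: mid_param)
  have m2: "midpoint a c = a + 0 *\<^sub>R (b - a) + (1/2) *\<^sub>R (c - a)" by (simp add: mid_param)
  have m3: "midpoint b c = a + (1/2) *\<^sub>R (b - a) + (1/2) *\<^sub>R (c - a)"
    by (rule vec_eq_iff[THEN iffD2]) (simp add: midpoint_def field_simps)
  have e4: "P (midpoint a b) = d0 + d1/2 + d3/4" unfolding m1 d by (simp add: power2_eq_square)
  have e5: "P (midpoint a c) = d0 + d2/2 + d5/4" unfolding m2 d by (simp add: power2_eq_square)
  have e6: "P (midpoint b c) = d0 + d1/2 + d2/2 + d3/4 + d4/4 + d5/4" unfolding m3 d by (simp add: power2_eq_square)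
  have zz: "d0 = 0" "d1 = 0" "d2 = 0" "d3 = 0" "d4 = 0" "d5 = 0"
    using e1 e2 e3 e4 e5 e6 z by linarith+
  obtain u v w where uvw: "x = u *\<^sub>R a + v *\<^sub>R b + w *\<^sub>R c" "u + v + w = 1"
    using x unfolding convex_hull_3 by blast
  have u: "u = 1 - v - w" using uvw(2) by simp
  have "x = a + v *\<^sub>R (b - a) + w *\<^sub>R (c - a)"
    unfolding uvw(1) u by (simp add: algebra_simps)
  then show ?thesis using d[of v w] zz by simp
qed

lemma tri_rep: "regular_triangulation \<Omega> \<T> \<Longrightarrow> T \<in> \<T> \<Longrightarrow>
   \<exists>a b c. \<not> collinear {a, b, c} \<and> T = convex hull {a, b, c}"
proof -
  assume RT: "regular_triangulation \<Omega> \<T>" and T: "T \<in> \<T>"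
  have "\<forall>T\<in>\<T>. is_triangle T" using RT unfolding regular_triangulation_def by (elim conjE)
  then have "is_triangle T" using T by blast
  then show ?thesis unfolding is_triangle_def .
qed

lemma mesh_edge_verts:
  assumes "closed_segment a b \<in> mesh_edges \<T>" "a \<noteq> b"
  shows "\<exists>T\<in>\<T>. a \<in> tri_verts T \<and> b \<in> tri_verts T"
proof -
  obtain T where T: "T \<in> \<T>" "closed_segment a b \<in> tri_edges T"
    using assms(1) unfolding mesh_edges_def by (rule UN_E)
  obtain x y where xy: "x \<in> tri_verts T" "y \<in> tri_verts T" "x \<noteq> y"
    "closed_segment a b = closed_segment x y"
    using T(2) unfolding tri_edges_def mem_Collect_eq by metis
  then have "{a, b} = {x, y}" by (simp only: closed_segment_eq)
  then have "a \<in> tri_verts T \<and> b \<in> tri_verts T" using xy(1,2) by (metis doubleton_eq_iff)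
  then show ?thesis using T(1) by blast
qed

lemma RT_conf: "regular_triangulation \<Omega> \<T> \<Longrightarrow> \<forall>T\<in>\<T>. \<forall>T'\<in>\<T>. T \<noteq> T' \<longrightarrow>
        T \<inter> T' = {} \<or>
        (\<exists>v. v \<in> tri_verts T \<and> v \<in> tri_verts T' \<and> T \<inter> T' = {v}) \<or>
        (\<exists>e. e \<in> tri_edges T \<and> e \<in> tri_edges T' \<and> T \<inter> T' = e)"
  unfolding regular_triangulation_def by (elim conjE)

lemma tri_edge_mesh: "T \<in> \<T> \<Longrightarrow> x \<in> tri_verts T \<Longrightarrow> y \<in> tri_verts T \<Longrightarrow> x \<noteq> y \<Longrightarrow>
   closed_segment x y \<in> mesh_edges \<T>"
  unfolding mesh_edges_def tri_edges_def by blast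

lemma verts_in_tri: "v \<in> tri_verts T \<Longrightarrow> v \<in> T"
  unfolding tri_verts_def extreme_point_of_def by blast

lemma seg_in_tri: "\<not> collinear {a, b, c::pt} \<Longrightarrow> x \<in> {a,b,c} \<Longrightarrow> y \<in> {a,b,c} \<Longrightarrow>
   closed_segment x y \<subseteq> convex hull {a, b, c}"
  by (meson closed_segment_subset convex_convex_hull hull_inc)

lemma E1:
  assumes nc: "\<not> collinear {a, b, c::pt}"
    and xy: "x \<in> {a,b,c}" "y \<in> {a,b,c}" "x \<noteq> y" and xy': "x' \<in> {a,b,c}" "y' \<in> {a,b,c}" "x' \<noteq> y'"
    and z: "z \<in> closed_segment x y" "z \<in> closed_segment x' y'"
  shows "{x, y} = {x', y'} \<or> (z \<in> {x, y} \<and> z \<in> {x', y'})"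
proof -
  have I1: "z \<in> closed_segment a b \<Longrightarrow> z \<in> closed_segment a c \<Longrightarrow> z = a" for z
    using seg_inter_vertex[OF nc] by blast
  have I2: "z \<in> closed_segment a b \<Longrightarrow> z \<in> closed_segment b c \<Longrightarrow> z = b" for z
    using seg_inter_vertex[of b a c] nc by (simp add: insert_commute closed_segment_commute)
  have I3: "z \<in> closed_segment a c \<Longrightarrow> z \<in> closed_segment b c \<Longrightarrow> z = c" for z
    using seg_inter_vertex[of c a b] nc by (simp add: insert_commute closed_segment_commute)
  have e: "{x,y} = {a,b} \<or> {x,y} = {b,c} \<or> {x,y} = {a,c}" using xy by auto
  have e': "{x',y'} = {a,b} \<or> {x',y'} = {b,c} \<or> {x',y'} = {a,c}" using xy' by auto
  have s: "closed_segment x y = closed_segment p q" if "{x,y} = {p,q}" for p q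
    using that by simp
  have s': "closed_segment x' y' = closed_segment p q" if "{x',y'} = {p,q}" for p q
    using that by simp
  from e show ?thesis
  proof (elim disjE)
    assume h: "{x,y} = {a,b}"
    from e' show ?thesis
    proof (elim disjE)
      assume h': "{x',y'} = {a,b}"
      show ?thesis using h h' by simp
    next
      assume h': "{x',y'} = {b,c}"
      have z1: "z \<in> closed_segment a b" using z(1) s[OF h] by simp
      have z2: "z \<in> closed_segment b c" using z(2) s'[OF h'] by simp
      have "z = b" using I2[OF z1 z2] .
      then show ?thesis using h h' by auto
    next
      assume h': "{x',y'} = {a,c}"
      have z1: "z \<in> closed_segment a b" using z(1) s[OF h] by simp
      have z2: "z \<in> closed_segment a c" using z(2) s'[OF h'] by simp
      have "z = a" using I1[OF z1 z2] .
      then show ?thesis using h h' by auto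
    qed
  next
    assume h: "{x,y} = {b,c}"
    from e' show ?thesis
    proof (elim disjE)
      assume h': "{x',y'} = {a,b}"
      have z1: "z \<in> closed_segment b c" using z(1) s[OF h] by simp
      have z2: "z \<in> closed_segment a b" using z(2) s'[OF h'] by simp
      have "z = b" using I2[OF z2 z1] .
      then show ?thesis using h h' by auto
    next
      assume h': "{x',y'} = {b,c}"
      show ?thesis using h h' by simp
    next
      assume h': "{x',y'} = {a,c}"
      have z1: "z \<in> closed_segment b c" using z(1) s[OF h] by simp
      have z2: "z \<in> closed_segment a c" using z(2) s'[OF h'] by simp
      have "z = c" using I3[OF z2 z1] .
      then show ?thesis using h h' by auto
    qed
  next
    assume h: "{x,y} = {a,c}"
    from e' show ?thesis
    proof (elim disjE)
      assume h': "{x',y'} = {a,b}"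
      have z1: "z \<in> closed_segment a c" using z(1) s[OF h] by simp
      have z2: "z \<in> closed_segment a b" using z(2) s'[OF h'] by simp
      have "z = a" using I1[OF z2 z1] .
      then show ?thesis using h h' by auto
    next
      assume h': "{x',y'} = {b,c}"
      have z1: "z \<in> closed_segment a c" using z(1) s[OF h] by simp
      have z2: "z \<in> closed_segment b c" using z(2) s'[OF h'] by simp
      have "z = c" using I3[OF z1 z2] .
      then show ?thesis using h h' by auto
    next
      assume h': "{x',y'} = {a,c}"
      show ?thesis using h h' by simp
    qed
  qed
qed

lemma vert_on_edge:
  assumes nc: "\<not> collinear {a, b, c::pt}"
    and v: "v \<in> {a,b,c}" and xy: "x \<in> {a,b,c}" "y \<in> {a,b,c}" "x \<noteq> y" and vs: "v \<in> closed_segment x y"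
  shows "v \<in> {x, y}"
proof -
  have d: "a \<noteq> b \<and> b \<noteq> c \<and> a \<noteq> c" using noncol_distinct[OF nc] .
  obtain o' where o: "o' \<in> {a,b,c}" "o' \<noteq> v" using d v by blast
  have "{x, y} = {v, o'} \<or> (v \<in> {x, y} \<and> v \<in> {v, o'})"
    by (rule E1[OF nc xy v o(1) o(2)[symmetric] vs ends_in_segment(1)])
  then show ?thesis by blast
qed

lemma M2:
  assumes RT: "regular_triangulation \<Omega> \<T>"
    and e1: "closed_segment a b \<in> mesh_edges \<T>" "a \<noteq> b"
    and e2: "closed_segment c d \<in> mesh_edges \<T>" "c \<noteq> d"
    and z: "z \<in> closed_segment a b" "z \<in> closed_segment c d"
  shows "{a, b} = {c, d} \<or> (z \<in> {a, b} \<and> z \<in> {c, d})"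
proof -
  obtain T where T: "T \<in> \<T>" "a \<in> tri_verts T" "b \<in> tri_verts T" using mesh_edge_verts[OF e1] by blast
  obtain T' where T': "T' \<in> \<T>" "c \<in> tri_verts T'" "d \<in> tri_verts T'" using mesh_edge_verts[OF e2] by blast
  obtain a0 b0 c0 where t: "\<not> collinear {a0, b0, c0}" "T = convex hull {a0, b0, c0}"
    using tri_rep[OF RT T(1)] by blast
  obtain a1 b1 c1 where t': "\<not> collinear {a1, b1, c1}" "T' = convex hull {a1, b1, c1}"
    using tri_rep[OF RT T'(1)] by blast
  have vT: "tri_verts T = {a0, b0, c0}" using tri_verts_3[OF t(1)] t(2) by simp
  have vT': "tri_verts T' = {a1, b1, c1}" using tri_verts_3[OF t'(1)] t'(2) by simp
  have ha: "a \<in> {a0, b0, c0}" and hb: "b \<in> {a0, b0, c0}" using T(2,3) vT by simp_all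
  have hc: "c \<in> {a1, b1, c1}" and hd: "d \<in> {a1, b1, c1}" using T'(2,3) vT' by simp_all
  have zT: "z \<in> T" using seg_in_tri[OF t(1) ha hb] t(2) z(1) by blast
  have zT': "z \<in> T'" using seg_in_tri[OF t'(1) hc hd] t'(2) z(2) by blast
  show ?thesis
  proof (cases "T = T'")
    case True
    have hc2: "c \<in> {a0, b0, c0}" and hd2: "d \<in> {a0, b0, c0}" using T'(2,3) vT True by simp_all
    show ?thesis by (rule E1[OF t(1) ha hb e1(2) hc2 hd2 e2(2) z(1) z(2)])
  next
    case False
    have "T \<inter> T' = {} \<or> (\<exists>v. v \<in> tri_verts T \<and> v \<in> tri_verts T' \<and> T \<inter> T' = {v}) \<or>
        (\<exists>e. e \<in> tri_edges T \<and> e \<in> tri_edges T' \<and> T \<inter> T' = e)"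
      by (rule RT_conf[OF RT, rule_format, OF T(1) T'(1) False])
    then show ?thesis
    proof (elim disjE exE conjE)
      assume "T \<inter> T' = {}" then show ?thesis using zT zT' by blast
    next
      fix v assume v: "v \<in> tri_verts T" "v \<in> tri_verts T'" "T \<inter> T' = {v}"
      then have zv: "z = v" using zT zT' by blast
      have h1: "z \<in> {a0, b0, c0}" using v(1) zv vT by simp
      have h2: "z \<in> {a1, b1, c1}" using v(2) zv vT' by simp
      have "z \<in> {a, b}" by (rule vert_on_edge[OF t(1) h1 ha hb e1(2) z(1)])
      moreover have "z \<in> {c, d}" by (rule vert_on_edge[OF t'(1) h2 hc hd e2(2) z(2)])
      ultimately show ?thesis by blast
    next
      fix e assume e: "e \<in> tri_edges T" "e \<in> tri_edges T'" "T \<inter> T' = e"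
      obtain s t where st: "s \<in> tri_verts T" "t \<in> tri_verts T" "s \<noteq> t" "e = closed_segment s t"
        using e(1) unfolding tri_edges_def mem_Collect_eq by metis
      obtain s' t' where st': "s' \<in> tri_verts T'" "t' \<in> tri_verts T'" "s' \<noteq> t'" "e = closed_segment s' t'"
        using e(2) unfolding tri_edges_def mem_Collect_eq by metis
      have eq: "{s, t} = {s', t'}" using st(4) st'(4) by (simp only: closed_segment_eq)
      have ze: "z \<in> e" using zT zT' e(3) by blast
      have hs: "s \<in> {a0, b0, c0}" and ht: "t \<in> {a0, b0, c0}" using st(1,2) vT by simp_all
      have hs': "s' \<in> {a1, b1, c1}" and ht': "t' \<in> {a1, b1, c1}" using st'(1,2) vT' by simp_all
      have A: "{a, b} = {s, t} \<or> (z \<in> {a, b} \<and> z \<in> {s, t})"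
        by (rule E1[OF t(1) ha hb e1(2) hs ht st(3) z(1)]) (use ze st(4) in simp)
      have B: "{c, d} = {s', t'} \<or> (z \<in> {c, d} \<and> z \<in> {s', t'})"
        by (rule E1[OF t'(1) hc hd e2(2) hs' ht' st'(3) z(2)]) (use ze st'(4) in simp)
      show ?thesis
      proof (cases "{a, b} = {s, t}")
        case A1: True
        show ?thesis
        proof (cases "{c, d} = {s', t'}")
          case True then show ?thesis using A1 eq by simp
        next
          case False then have "z \<in> {c, d} \<and> z \<in> {s', t'}" using B by blast
          then show ?thesis using A1 eq by simp
        qed
      next
        case False then have A2: "z \<in> {a, b} \<and> z \<in> {s, t}" using A by blast
        show ?thesis
        proof (cases "{c, d} = {s', t'}")
          case True then show ?thesis using A2 eq by simp
        next
          case False then have "z \<in> {c, d} \<and> z \<in> {s', t'}" using B by blast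
          then show ?thesis using A2 by simp
        qed
      qed
    qed
  qed
qed

lemma node_on_edge:
  assumes RT: "regular_triangulation \<Omega> \<T>"
    and e: "closed_segment a b \<in> mesh_edges \<T>" "a \<noteq> b"
    and y: "y \<in> mesh_verts \<T> \<union> mesh_mids \<T>" "y \<in> closed_segment a b"
  shows "y \<in> {a, b, midpoint a b}"
  using y(1)
proof
  assume "y \<in> mesh_verts \<T>"
  then obtain T where T: "T \<in> \<T>" "y \<in> tri_verts T" unfolding mesh_verts_def by (rule UN_E)
  obtain a0 b0 c0 where t: "\<not> collinear {a0, b0, c0}" "T = convex hull {a0, b0, c0}"
    using tri_rep[OF RT T(1)] by blast
  have vT: "tri_verts T = {a0, b0, c0}" using tri_verts_3[OF t(1)] t(2) by simp
  have d: "a0 \<noteq> b0 \<and> b0 \<noteq> c0 \<and> a0 \<noteq> c0" using noncol_distinct[OF t(1)] .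
  have "\<exists>o'. o' \<in> {a0, b0, c0} \<and> o' \<noteq> y" using d by blast
  then obtain o' where o: "o' \<in> tri_verts T" "o' \<noteq> y" using vT by blast
  have "closed_segment y o' \<in> mesh_edges \<T>" using tri_edge_mesh[OF T(1) T(2) o(1)] o(2) by simp
  then have "{a, b} = {y, o'} \<or> (y \<in> {a, b} \<and> y \<in> {y, o'})"
    using M2[OF RT e _ _ y(2) ends_in_segment(1)] o(2) by blast
  then show ?thesis by blast
next
  assume "y \<in> mesh_mids \<T>"
  then obtain c d where cd: "y = midpoint c d" "c \<noteq> d" "closed_segment c d \<in> mesh_edges \<T>"
    unfolding mesh_mids_def mem_Collect_eq by metis
  have "{a, b} = {c, d} \<or> (y \<in> {a, b} \<and> y \<in> {c, d})"
    using M2[OF RT e cd(3) cd(2) y(2)] cd(1) by simp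
  then show ?thesis
  proof
    assume "{a, b} = {c, d}"
    then have "midpoint a b = midpoint c d" by (metis doubleton_eq_iff midpoint_sym)
    then show ?thesis using cd by simp
  next
    assume "y \<in> {a, b} \<and> y \<in> {c, d}"
    then show ?thesis using cd by auto
  qed
qed

definition tnod :: "(pt \<Rightarrow> real) \<Rightarrow> pt set \<Rightarrow> (pt \<Rightarrow> real) \<Rightarrow> bool" where
  "tnod \<delta> T P \<longleftrightarrow> (\<forall>v\<in>tri_verts T. P v = \<delta> v) \<and>
     (\<forall>v\<in>tri_verts T. \<forall>w\<in>tri_verts T. v \<noteq> w \<longrightarrow> P (midpoint v w) = \<delta> (midpoint v w))"

lemma qp_cont: "qp P \<Longrightarrow> continuous_on S P"
proof -
  assume "qp P"
  then obtain c0 c1 c2 c3 c4 c5 where c: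
    "\<forall>x. P x = c0 + c1 * x$1 + c2 * x$2 + c3 * (x$1)\<^sup>2 + c4 * (x$1 * x$2) + c5 * (x$2)\<^sup>2"
    unfolding qp_def by metis
  have e: "P = (\<lambda>x. c0 + c1 * x$1 + c2 * x$2 + c3 * (x$1)\<^sup>2 + c4 * (x$1 * x$2) + c5 * (x$2)\<^sup>2)"
    using c by (intro ext) simp
  have "continuous_on S (\<lambda>x::pt. c0 + c1 * x$1 + c2 * x$2 + c3 * (x$1)\<^sup>2 + c4 * (x$1 * x$2) + c5 * (x$2)\<^sup>2)"
    by (intro continuous_intros)
  then show ?thesis using e by simp
qed

lemma quad_on_qp: "quad_on T f \<longleftrightarrow> (\<exists>P. qp P \<and> (\<forall>x\<in>T. f x = P x))"
proof
  assume "quad_on T f"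
  then obtain c0 c1 c2 c3 c4 c5 where c:
    "\<forall>x\<in>T. f x = c0 + c1 * x$1 + c2 * x$2 + c3 * (x$1)\<^sup>2 + c4 * (x$1 * x$2) + c5 * (x$2)\<^sup>2"
    unfolding quad_on_def by metis
  have "qp (\<lambda>x. c0 + c1 * x$1 + c2 * x$2 + c3 * (x$1)\<^sup>2 + c4 * (x$1 * x$2) + c5 * (x$2)\<^sup>2)"
    unfolding qp_def by blast
  then show "\<exists>P. qp P \<and> (\<forall>x\<in>T. f x = P x)" using c by blast
next
  assume "\<exists>P. qp P \<and> (\<forall>x\<in>T. f x = P x)"
  then obtain P where P: "qp P" "\<forall>x\<in>T. f x = P x" by blast
  then obtain c0 c1 c2 c3 c4 c5 where c:
    "\<forall>x. P x = c0 + c1 * x$1 + c2 * x$2 + c3 * (x$1)\<^sup>2 + c4 * (x$1 * x$2) + c5 * (x$2)\<^sup>2"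
    unfolding qp_def by metis
  then have "\<forall>x\<in>T. f x = c0 + c1 * x$1 + c2 * x$2 + c3 * (x$1)\<^sup>2 + c4 * (x$1 * x$2) + c5 * (x$2)\<^sup>2"
    using P(2) by simp
  then show "quad_on T f" unfolding quad_on_def by blast
qed

lemma RT_union: "regular_triangulation \<Omega> \<T> \<Longrightarrow> \<Union>\<T> = closure \<Omega>"
  unfolding regular_triangulation_def by (elim conjE)

lemma RT_finite: "regular_triangulation \<Omega> \<T> \<Longrightarrow> finite \<T>"
  unfolding regular_triangulation_def by (elim conjE)

lemma tri_convex: "regular_triangulation \<Omega> \<T> \<Longrightarrow> T \<in> \<T> \<Longrightarrow> convex T"
  using tri_rep by (metis convex_convex_hull)

lemma tri_closed: "regular_triangulation \<Omega> \<T> \<Longrightarrow> T \<in> \<T> \<Longrightarrow> closed T"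
proof -
  assume "regular_triangulation \<Omega> \<T>" "T \<in> \<T>"
  then obtain a b c where "T = convex hull {a, b, c::pt}" using tri_rep by blast
  then show "closed T" by (simp add: compact_imp_closed finite_imp_compact_convex_hull)
qed

lemma seg_sub_tri: "regular_triangulation \<Omega> \<T> \<Longrightarrow> T \<in> \<T> \<Longrightarrow> v \<in> tri_verts T \<Longrightarrow> w \<in> tri_verts T \<Longrightarrow>
   closed_segment v w \<subseteq> T"
  by (meson closed_segment_subset tri_convex verts_in_tri)

lemma tnod_vals:
  assumes "tnod \<delta> T P" "tri_verts T = {a, b, c}"
  shows "P a = \<delta> a \<and> P b = \<delta> b \<and> P c = \<delta> c"
    "a \<noteq> b \<Longrightarrow> P (midpoint a b) = \<delta> (midpoint a b)"
    "b \<noteq> c \<Longrightarrow> P (midpoint b c) = \<delta> (midpoint b c)"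
    "a \<noteq> c \<Longrightarrow> P (midpoint a c) = \<delta> (midpoint a c)"
  using assms unfolding tnod_def by simp_all

lemma tnod_exists:
  assumes RT: "regular_triangulation \<Omega> \<T>" and T: "T \<in> \<T>"
  shows "\<exists>P. qp P \<and> tnod \<delta> T P"
proof -
  obtain a b c where t: "\<not> collinear {a, b, c}" "T = convex hull {a, b, c}"
    using tri_rep[OF RT T] by blast
  have vT: "tri_verts T = {a, b, c}" using tri_verts_3[OF t(1)] t(2) by simp
  obtain P where P: "qp P" "P a = \<delta> a" "P b = \<delta> b" "P c = \<delta> c" "P (midpoint a b) = \<delta> (midpoint a b)"
     "P (midpoint b c) = \<delta> (midpoint b c)" "P (midpoint a c) = \<delta> (midpoint a c)"
    using tri_interp[OF t(1), of \<delta>] by blast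
  have "tnod \<delta> T P" unfolding tnod_def vT using P by (auto simp: midpoint_sym)
  then show ?thesis using P(1) by blast
qed

lemma tnod_unique:
  assumes RT: "regular_triangulation \<Omega> \<T>" and T: "T \<in> \<T>"
    and P: "qp P" "tnod \<delta> T P" and Q: "qp Q" "tnod \<delta> T Q" and x: "x \<in> T"
  shows "P x = Q x"
proof -
  obtain a b c where t: "\<not> collinear {a, b, c}" "T = convex hull {a, b, c}"
    using tri_rep[OF RT T] by blast
  have vT: "tri_verts T = {a, b, c}" using tri_verts_3[OF t(1)] t(2) by simp
  have d: "a \<noteq> b" "b \<noteq> c" "a \<noteq> c" using noncol_distinct[OF t(1)] by auto
  have R: "qp (\<lambda>x. P x - Q x)" by (rule qp_diff[OF P(1) Q(1)])
  have "(\<lambda>x. P x - Q x) x = 0"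
    apply (rule tri_unisolv[OF t(1) R])
    using tnod_vals[OF P(2) vT] tnod_vals[OF Q(2) vT] d x t(2) by simp_all
  then show ?thesis by simp
qed

lemma tnod_consist:
  assumes RT: "regular_triangulation \<Omega> \<T>" and T: "T \<in> \<T>" and T': "T' \<in> \<T>"
    and P: "qp P" "tnod \<delta> T P" and P': "qp P'" "tnod \<delta> T' P'" and x: "x \<in> T" "x \<in> T'"
  shows "P x = P' x"
proof (cases "T = T'")
  case True then show ?thesis using tnod_unique[OF RT T P(1) P(2) P'(1)] P'(2) x by simp
next
  case False
  have "T \<inter> T' = {} \<or> (\<exists>v. v \<in> tri_verts T \<and> v \<in> tri_verts T' \<and> T \<inter> T' = {v}) \<or>
        (\<exists>e. e \<in> tri_edges T \<and> e \<in> tri_edges T' \<and> T \<inter> T' = e)"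
    by (rule RT_conf[OF RT, rule_format, OF T T' False])
  then show ?thesis
  proof (elim disjE exE conjE)
    assume "T \<inter> T' = {}" then show ?thesis using x by blast
  next
    fix v assume v: "v \<in> tri_verts T" "v \<in> tri_verts T'" "T \<inter> T' = {v}"
    then have "x = v" using x by blast
    then show ?thesis using P(2) P'(2) v unfolding tnod_def by simp
  next
    fix e assume e: "e \<in> tri_edges T" "e \<in> tri_edges T'" "T \<inter> T' = e"
    obtain s t where st: "s \<in> tri_verts T" "t \<in> tri_verts T" "s \<noteq> t" "e = closed_segment s t"
      using e(1) unfolding tri_edges_def mem_Collect_eq by metis
    obtain s' t' where st': "s' \<in> tri_verts T'" "t' \<in> tri_verts T'" "s' \<noteq> t'" "e = closed_segment s' t'"
      using e(2) unfolding tri_edges_def mem_Collect_eq by metis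
    have eq: "{s, t} = {s', t'}" using st(4) st'(4) by (simp only: closed_segment_eq)
    then have st2: "s \<in> tri_verts T'" "t \<in> tri_verts T'" using st' by (metis doubleton_eq_iff)+
    have R: "qp (\<lambda>x. P x - P' x)" by (rule qp_diff[OF P(1) P'(1)])
    have "(\<lambda>x. P x - P' x) x = 0"
    proof (rule qp_seg_zero[OF R])
      show "P s - P' s = 0" using P(2) P'(2) st(1) st2(1) unfolding tnod_def by simp
      show "P t - P' t = 0" using P(2) P'(2) st(2) st2(2) unfolding tnod_def by simp
      show "P (midpoint s t) - P' (midpoint s t) = 0"
        using P(2) P'(2) st(1,2,3) st2 unfolding tnod_def by simp
      show "x \<in> closed_segment s t" using x e(3) st(4) by blast
    qed
    then show ?thesis by simp
  qed
qed

definition Psi :: "pt set \<Rightarrow> pt set set \<Rightarrow> (pt \<Rightarrow> real) \<Rightarrow> pt \<Rightarrow> real" where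
  "Psi \<Omega> \<T> \<delta> x = (if x \<in> closure \<Omega> then (SOME y. \<exists>T\<in>\<T>. x \<in> T \<and> (\<exists>P. qp P \<and> tnod \<delta> T P \<and> y = P x)) else 0)"

lemma Psi_on:
  assumes RT: "regular_triangulation \<Omega> \<T>" and T: "T \<in> \<T>" and P: "qp P" "tnod \<delta> T P" and x: "x \<in> T"
  shows "Psi \<Omega> \<T> \<delta> x = P x"
proof -
  have xc: "x \<in> closure \<Omega>" using RT_union[OF RT] T x by blast
  have ex: "\<exists>y. \<exists>T\<in>\<T>. x \<in> T \<and> (\<exists>P. qp P \<and> tnod \<delta> T P \<and> y = P x)" using T P x by blast
  from someI_ex[OF ex] obtain T' P' where h: "T' \<in> \<T>" "x \<in> T'" "qp P'" "tnod \<delta> T' P'"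
    "(SOME y. \<exists>T\<in>\<T>. x \<in> T \<and> (\<exists>P. qp P \<and> tnod \<delta> T P \<and> y = P x)) = P' x" by blast
  have "P' x = P x" using tnod_consist[OF RT h(1) T h(3) h(4) P h(2) x] .
  then show ?thesis unfolding Psi_def using xc h(5) by simp
qed

definition psiP :: "pt set \<Rightarrow> pt set set \<Rightarrow> pt \<Rightarrow> (pt \<Rightarrow> real) \<Rightarrow> bool" where
  "psiP \<Omega> \<T> z f \<longleftrightarrow> continuous_on (closure \<Omega>) f \<and> (\<forall>T\<in>\<T>. quad_on T f) \<and>
      (\<forall>y\<in>mesh_verts \<T> \<union> mesh_mids \<T>. f y = (if y = z then 1 else 0)) \<and>
      (\<forall>x. x \<notin> closure \<Omega> \<longrightarrow> f x = 0)"

lemma psi_eq: "psi \<Omega> \<T> z = (THE f. psiP \<Omega> \<T> z f)"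
  unfolding psi_def psiP_def by simp

lemma psiP_Psi:
  assumes RT: "regular_triangulation \<Omega> \<T>"
  shows "psiP \<Omega> \<T> z (Psi \<Omega> \<T> (\<lambda>y. if y = z then 1 else 0))"
  (is "psiP _ _ _ (Psi _ _ ?d)")
proof -
  have on: "\<exists>P. qp P \<and> tnod ?d T P \<and> (\<forall>x\<in>T. Psi \<Omega> \<T> ?d x = P x)" if T: "T \<in> \<T>" for T
    using tnod_exists[OF RT T, of ?d] Psi_on[OF RT T] by blast
  have cont: "continuous_on (\<Union>T\<in>\<T>. T) (Psi \<Omega> \<T> ?d)"
  proof (rule continuous_on_closed_Union)
    show "finite \<T>" using RT_finite[OF RT] .
    show "closed T" if "T \<in> \<T>" for T using tri_closed[OF RT that] .
    show "continuous_on T (Psi \<Omega> \<T> ?d)" if T: "T \<in> \<T>" for T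
    proof -
      obtain P where P: "qp P" "\<forall>x\<in>T. Psi \<Omega> \<T> ?d x = P x" using on[OF T] by blast
      show ?thesis using continuous_on_cong[of T T "Psi \<Omega> \<T> ?d" P] P qp_cont[OF P(1)] by simp
    qed
  qed
  have "(\<Union>T\<in>\<T>. T) = closure \<Omega>" using RT_union[OF RT] by simp
  then have c1: "continuous_on (closure \<Omega>) (Psi \<Omega> \<T> ?d)" using cont by simp
  have c2: "\<forall>T\<in>\<T>. quad_on T (Psi \<Omega> \<T> ?d)"
    using on unfolding quad_on_qp by blast
  have c3: "Psi \<Omega> \<T> ?d y = ?d y" if y: "y \<in> mesh_verts \<T> \<union> mesh_mids \<T>" for y
    using y
  proof
    assume "y \<in> mesh_verts \<T>"
    then obtain T where T: "T \<in> \<T>" "y \<in> tri_verts T" unfolding mesh_verts_def by (rule UN_E)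
    obtain P where P: "qp P" "tnod ?d T P" "\<forall>x\<in>T. Psi \<Omega> \<T> ?d x = P x" using on[OF T(1)] by blast
    show ?thesis using P T verts_in_tri[OF T(2)] unfolding tnod_def by simp
  next
    assume "y \<in> mesh_mids \<T>"
    then obtain c d where cd: "y = midpoint c d" "c \<noteq> d" "closed_segment c d \<in> mesh_edges \<T>"
      unfolding mesh_mids_def mem_Collect_eq by metis
    obtain T where T: "T \<in> \<T>" "c \<in> tri_verts T" "d \<in> tri_verts T"
      using mesh_edge_verts[OF cd(3) cd(2)] by blast
    obtain P where P: "qp P" "tnod ?d T P" "\<forall>x\<in>T. Psi \<Omega> \<T> ?d x = P x" using on[OF T(1)] by blast
    have "y \<in> T" using seg_sub_tri[OF RT T] cd(1) midpoint_in_closed_segment by blast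
    then show ?thesis using P T cd unfolding tnod_def by simp
  qed
  have c4: "\<forall>x. x \<notin> closure \<Omega> \<longrightarrow> Psi \<Omega> \<T> ?d x = 0" unfolding Psi_def by simp
  show ?thesis unfolding psiP_def using c1 c2 c3 c4 by blast
qed

lemma psiP_unique:
  assumes RT: "regular_triangulation \<Omega> \<T>" and f: "psiP \<Omega> \<T> z f"
  shows "f = Psi \<Omega> \<T> (\<lambda>y. if y = z then 1 else 0)"
    (is "_ = Psi _ _ ?d")
proof
  fix x
  show "f x = Psi \<Omega> \<T> ?d x"
  proof (cases "x \<in> closure \<Omega>")
    case False
    then show ?thesis using f unfolding psiP_def Psi_def by simp
  next
    case True
    then obtain T where T: "T \<in> \<T>" "x \<in> T" using RT_union[OF RT] by blast
    obtain Q where Q: "qp Q" "\<forall>x\<in>T. f x = Q x" using f T(1) unfolding psiP_def quad_on_qp by blast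
    have nod: "\<forall>y\<in>mesh_verts \<T> \<union> mesh_mids \<T>. f y = ?d y" using f unfolding psiP_def by blast
    have "tnod ?d T Q" unfolding tnod_def
    proof (intro conjI ballI impI)
      fix v assume v: "v \<in> tri_verts T"
      have "v \<in> mesh_verts \<T>" using T(1) v unfolding mesh_verts_def by blast
      then have "f v = ?d v" using nod by blast
      then show "Q v = ?d v" using Q(2) verts_in_tri[OF v] by simp
    next
      fix v w assume v: "v \<in> tri_verts T" and w: "w \<in> tri_verts T" and vw: "v \<noteq> w"
      have "closed_segment v w \<in> mesh_edges \<T>" by (rule tri_edge_mesh[OF T(1) v w vw])
      then have "midpoint v w \<in> mesh_mids \<T>" unfolding mesh_mids_def using vw by blast
      moreover have "midpoint v w \<in> T" using seg_sub_tri[OF RT T(1) v w] midpoint_in_closed_segment by blast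
      ultimately show "Q (midpoint v w) = ?d (midpoint v w)"
      proof -
        assume m: "midpoint v w \<in> mesh_mids \<T>" "midpoint v w \<in> T"
        then have "f (midpoint v w) = ?d (midpoint v w)" using nod by blast
        then show ?thesis using Q(2) m(2) by simp
      qed
    qed
    obtain P where P: "qp P" "tnod ?d T P" using tnod_exists[OF RT T(1)] by blast
    have "Psi \<Omega> \<T> ?d x = P x" using Psi_on[OF RT T(1) P T(2)] .
    also have "P x = Q x" using tnod_unique[OF RT T(1) P Q(1) \<open>tnod ?d T Q\<close> T(2)] .
    finally show ?thesis using Q(2) T(2) by simp
  qed
qed

lemma psi_props:
  assumes RT: "regular_triangulation \<Omega> \<T>"
  shows "psiP \<Omega> \<T> z (psi \<Omega> \<T> z)"
proof -
  have "\<exists>!f. psiP \<Omega> \<T> z f" using psiP_Psi[OF RT] psiP_unique[OF RT] by blast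
  then show ?thesis unfolding psi_eq by (rule theI')
qed

definition interp :: "(pt \<Rightarrow> real) \<Rightarrow> pt \<Rightarrow> pt \<Rightarrow> pt \<Rightarrow> real" where
  "interp \<delta> a m x = \<delta> a + (\<delta> m - \<delta> a) * (((x - a) \<bullet> (m - a)) / ((m - a) \<bullet> (m - a)))"

lemma interp_seg: "a \<noteq> m \<Longrightarrow> interp \<delta> a m (a + t *\<^sub>R (m - a)) = \<delta> a + (\<delta> m - \<delta> a) * t"
  unfolding interp_def by simp

lemma interp_a: "interp \<delta> a m a = \<delta> a"
  unfolding interp_def by simp

lemma interp_m: "a \<noteq> m \<Longrightarrow> interp \<delta> a m m = \<delta> m"
  using interp_seg[of a m \<delta> 1] by simp

lemma interp_af: "af (interp \<delta> a m)"
proof -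
  have e: "interp \<delta> a m = (\<lambda>x. \<delta> a + (\<delta> m - \<delta> a) * ((1 / ((m - a) \<bullet> (m - a))) * ((x - a) \<bullet> (m - a))))"
    unfolding interp_def by (intro ext) simp
  show ?thesis unfolding e by (intro af_add af_const af_cmul af_inner)
qed

lemma interp_cont: "continuous_on S (interp \<delta> a m)"
  using qp_cont[OF af_qp[OF interp_af]] .

lemma half_sub: "closed_segment a (midpoint a b) \<subseteq> closed_segment a (b::pt)"
  by (simp add: closed_segment_subset)

lemma far_end: "a \<noteq> b \<Longrightarrow> b \<notin> closed_segment a (midpoint a (b::pt))"
proof
  assume ab: "a \<noteq> b" and b: "b \<in> closed_segment a (midpoint a b)"
  have "dist b a \<le> dist a (midpoint a b)" using dist_in_closed_segment[OF b] by simp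
  then have "dist a b \<le> dist a b / 2" by (simp add: dist_midpoint dist_commute)
  then have "dist a b \<le> 0" by simp
  then show False using ab by simp
qed

lemma halves_meet: "x \<in> closed_segment a (midpoint a b) \<Longrightarrow> x \<in> closed_segment b (midpoint a (b::pt)) \<Longrightarrow>
   x = midpoint a b"
proof -
  assume x1: "x \<in> closed_segment a (midpoint a b)" and x2: "x \<in> closed_segment b (midpoint a b)"
  have "closed_segment a (midpoint a b) \<inter> closed_segment (midpoint a b) b = {midpoint a b}"
    by (rule Int_closed_segment) simp
  then show ?thesis using x1 x2 by (auto simp: closed_segment_commute)
qed

definition HR :: "pt set set \<Rightarrow> pt set \<Rightarrow> pt \<Rightarrow> pt \<Rightarrow> bool" where
  "HR \<T> \<Gamma>C a b \<longleftrightarrow> a \<noteq> b \<and> closed_segment a b \<in> contact_edges \<T> \<Gamma>C"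

lemma HR_mesh: "HR \<T> \<Gamma>C a b \<Longrightarrow> closed_segment a b \<in> mesh_edges \<T>"
  unfolding HR_def contact_edges_def by simp

lemma HR_sub: "HR \<T> \<Gamma>C a b \<Longrightarrow> closed_segment a b \<subseteq> closure \<Gamma>C"
  unfolding HR_def contact_edges_def by simp

lemma interp_consist:
  assumes RT: "regular_triangulation \<Omega> \<T>" and ab: "HR \<T> \<Gamma>C a b" and cd: "HR \<T> \<Gamma>C c d"
    and x: "x \<in> closed_segment a (midpoint a b)" "x \<in> closed_segment c (midpoint c d)"
  shows "interp \<delta> a (midpoint a b) x = interp \<delta> c (midpoint c d) x"
proof -
  have a_b: "a \<noteq> b" and c_d: "c \<noteq> d" using ab cd unfolding HR_def by auto
  have xab: "x \<in> closed_segment a b" using x(1) half_sub by blast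
  have xcd: "x \<in> closed_segment c d" using x(2) half_sub by blast
  have "{a, b} = {c, d} \<or> (x \<in> {a, b} \<and> x \<in> {c, d})"
    by (rule M2[OF RT HR_mesh[OF ab] a_b HR_mesh[OF cd] c_d xab xcd])
  then show ?thesis
  proof
    assume "{a, b} = {c, d}"
    then have "(c = a \<and> d = b) \<or> (c = b \<and> d = a)" by (metis doubleton_eq_iff)
    then show ?thesis
    proof
      assume "c = a \<and> d = b" then show ?thesis by simp
    next
      assume h: "c = b \<and> d = a"
      then have m: "midpoint c d = midpoint a b" by (simp add: midpoint_sym)
      have "x = midpoint a b" using halves_meet[OF x(1)] x(2) h m by simp
      moreover have "a \<noteq> midpoint a b" "b \<noteq> midpoint a b" using a_b by (metis midpoint_eq_endpoint)+
      ultimately show ?thesis using h m interp_m by metis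
    qed
  next
    assume h: "x \<in> {a, b} \<and> x \<in> {c, d}"
    have "x \<noteq> b" using far_end[OF a_b] x(1) by blast
    moreover have "x \<noteq> d" using far_end[OF c_d] x(2) by blast
    ultimately have "x = a" "x = c" using h by auto
    then show ?thesis by (simp add: interp_a)
  qed
qed

definition Phi :: "pt set set \<Rightarrow> pt set \<Rightarrow> (pt \<Rightarrow> real) \<Rightarrow> pt \<Rightarrow> real" where
  "Phi \<T> \<Gamma>C \<delta> x = (if x \<in> closure \<Gamma>C then (SOME y. \<exists>a b. HR \<T> \<Gamma>C a b \<and>
      x \<in> closed_segment a (midpoint a b) \<and> y = interp \<delta> a (midpoint a b) x) else 0)"

lemma Phi_on:
  assumes RT: "regular_triangulation \<Omega> \<T>" and ab: "HR \<T> \<Gamma>C a b"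
    and x: "x \<in> closed_segment a (midpoint a b)"
  shows "Phi \<T> \<Gamma>C \<delta> x = interp \<delta> a (midpoint a b) x"
proof -
  have xc: "x \<in> closure \<Gamma>C" using HR_sub[OF ab] half_sub x by blast
  have ex: "\<exists>y. \<exists>a b. HR \<T> \<Gamma>C a b \<and> x \<in> closed_segment a (midpoint a b) \<and> y = interp \<delta> a (midpoint a b) x"
    using ab x by blast
  from someI_ex[OF ex] obtain c d where h: "HR \<T> \<Gamma>C c d" "x \<in> closed_segment c (midpoint c d)"
    "(SOME y. \<exists>a b. HR \<T> \<Gamma>C a b \<and> x \<in> closed_segment a (midpoint a b) \<and> y = interp \<delta> a (midpoint a b) x)
       = interp \<delta> c (midpoint c d) x" by blast
  have "interp \<delta> c (midpoint c d) x = interp \<delta> a (midpoint a b) x"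
    by (rule interp_consist[OF RT h(1) ab h(2) x])
  then show ?thesis unfolding Phi_def using xc h(3) by simp
qed

lemma cover:
  assumes CG: "\<exists>E\<subseteq>mesh_edges \<T>. closure \<Gamma>C = \<Union>E" and x: "x \<in> closure \<Gamma>C"
  shows "\<exists>a b. HR \<T> \<Gamma>C a b \<and> x \<in> closed_segment a (midpoint a b)"
proof -
  obtain E where E: "E \<subseteq> mesh_edges \<T>" "closure \<Gamma>C = \<Union>E" using CG by blast
  obtain e where e: "e \<in> E" "x \<in> e" using x E(2) by blast
  have em: "e \<in> mesh_edges \<T>" using e(1) E(1) by blast
  then obtain T where T: "T \<in> \<T>" "e \<in> tri_edges T" unfolding mesh_edges_def by (rule UN_E)
  obtain a b where ab: "a \<in> tri_verts T" "b \<in> tri_verts T" "a \<noteq> b" "e = closed_segment a b"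
    using T(2) unfolding tri_edges_def mem_Collect_eq by metis
  have sub: "e \<subseteq> closure \<Gamma>C" using e(1) E(2) by blast
  have h1: "HR \<T> \<Gamma>C a b" unfolding HR_def contact_edges_def using ab em sub by simp
  have h2: "HR \<T> \<Gamma>C b a" unfolding HR_def contact_edges_def using ab em sub
    by (simp add: closed_segment_commute)
  have "x \<in> closed_segment a (midpoint a b) \<union> closed_segment (midpoint a b) b"
    using Un_closed_segment[of "midpoint a b" a b] e(2) ab(4) by simp
  then show ?thesis
  proof
    assume "x \<in> closed_segment a (midpoint a b)" then show ?thesis using h1 by blast
  next
    assume "x \<in> closed_segment (midpoint a b) b"
    then have "x \<in> closed_segment b (midpoint b a)" by (simp add: closed_segment_commute midpoint_sym)
    then show ?thesis using h2 by blast
  qed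
qed

lemma mesh_verts_finite:
  assumes RT: "regular_triangulation \<Omega> \<T>" shows "finite (mesh_verts \<T>)"
  unfolding mesh_verts_def
proof (rule finite_UN_I)
  show "finite \<T>" using RT_finite[OF RT] .
  fix T assume T: "T \<in> \<T>"
  obtain a b c where t: "\<not> collinear {a, b, c}" "T = convex hull {a, b, c}"
    using tri_rep[OF RT T] by blast
  show "finite (tri_verts T)" using tri_verts_3[OF t(1)] t(2) by simp
qed

lemma HR_verts: "HR \<T> \<Gamma>C a b \<Longrightarrow> a \<in> mesh_verts \<T> \<and> b \<in> mesh_verts \<T>"
  using mesh_edge_verts[OF HR_mesh] unfolding HR_def mesh_verts_def by blast

lemma half_finite:
  assumes RT: "regular_triangulation \<Omega> \<T>" shows "finite (half_edges \<T> \<Gamma>C)"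
proof -
  have "half_edges \<T> \<Gamma>C \<subseteq> (\<lambda>(a, b). closed_segment a (midpoint a b)) ` (mesh_verts \<T> \<times> mesh_verts \<T>)"
  proof
    fix S assume "S \<in> half_edges \<T> \<Gamma>C"
    then obtain a b where ab: "S = closed_segment a (midpoint a b)" "HR \<T> \<Gamma>C a b"
      unfolding half_edges_def HR_def mem_Collect_eq by metis
    then show "S \<in> (\<lambda>(a, b). closed_segment a (midpoint a b)) ` (mesh_verts \<T> \<times> mesh_verts \<T>)"
      using HR_verts[OF ab(2)] by force
  qed
  moreover have "finite (mesh_verts \<T> \<times> mesh_verts \<T>)" using mesh_verts_finite[OF RT] by simp
  ultimately show ?thesis using finite_subset by blast
qed

lemma half_edges_HR: "S \<in> half_edges \<T> \<Gamma>C \<longleftrightarrow> (\<exists>a b. HR \<T> \<Gamma>C a b \<and> S = closed_segment a (midpoint a b))"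
  unfolding half_edges_def HR_def by blast

lemma contact_nodes_sub: "contact_nodes \<T> \<Gamma>C \<subseteq> (mesh_verts \<T> \<union> mesh_mids \<T>) \<inter> closure \<Gamma>C"
proof
  fix y assume "y \<in> contact_nodes \<T> \<Gamma>C"
  then consider "y \<in> mesh_verts \<T> \<inter> closure \<Gamma>C" | a b where "y = midpoint a b" "HR \<T> \<Gamma>C a b"
    unfolding contact_nodes_def HR_def by blast
  then show "y \<in> (mesh_verts \<T> \<union> mesh_mids \<T>) \<inter> closure \<Gamma>C"
  proof cases
    case 1 then show ?thesis by blast
  next
    case 2
    have "y \<in> mesh_mids \<T>" unfolding mesh_mids_def using 2 HR_mesh[OF 2(2)] unfolding HR_def by blast
    moreover have "y \<in> closure \<Gamma>C" using HR_sub[OF 2(2)] 2(1) midpoint_in_closed_segment by blast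
    ultimately show ?thesis by blast
  qed
qed

lemma HR_nodes: "HR \<T> \<Gamma>C a b \<Longrightarrow> a \<in> contact_nodes \<T> \<Gamma>C \<and> midpoint a b \<in> contact_nodes \<T> \<Gamma>C"
proof -
  assume h: "HR \<T> \<Gamma>C a b"
  have "a \<in> mesh_verts \<T> \<inter> closure \<Gamma>C" using HR_verts[OF h] HR_sub[OF h] by auto
  moreover have "midpoint a b \<in> {midpoint a b | a b. a \<noteq> b \<and> closed_segment a b \<in> contact_edges \<T> \<Gamma>C}"
    using h unfolding HR_def by blast
  ultimately show ?thesis unfolding contact_nodes_def by blast
qed

definition phiP :: "pt set set \<Rightarrow> pt set \<Rightarrow> pt \<Rightarrow> (pt \<Rightarrow> real) \<Rightarrow> bool" where
  "phiP \<T> \<Gamma>C z f \<longleftrightarrow> continuous_on (closure \<Gamma>C) f \<and> (\<forall>S\<in>half_edges \<T> \<Gamma>C. aff_on S f) \<and>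
      (\<forall>y\<in>contact_nodes \<T> \<Gamma>C. f y = (if y = z then 1 else 0)) \<and>
      (\<forall>x. x \<notin> closure \<Gamma>C \<longrightarrow> f x = 0)"

lemma phi_eq: "phi \<T> \<Gamma>C z = (THE f. phiP \<T> \<Gamma>C z f)"
  unfolding phi_def phiP_def by simp

lemma aff_on_af: "aff_on S f \<longleftrightarrow> (\<exists>A. af A \<and> (\<forall>x\<in>S. f x = A x))"
proof
  assume "aff_on S f"
  then obtain c0 c1 c2 where c: "\<forall>x\<in>S. f x = c0 + c1 * x$1 + c2 * x$2" unfolding aff_on_def by metis
  have "af (\<lambda>x. c0 + c1 * x$1 + c2 * x$2)" unfolding af_def by blast
  then show "\<exists>A. af A \<and> (\<forall>x\<in>S. f x = A x)" using c by blast
next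
  assume "\<exists>A. af A \<and> (\<forall>x\<in>S. f x = A x)"
  then obtain A where A: "af A" "\<forall>x\<in>S. f x = A x" by blast
  then obtain c0 c1 c2 where c: "\<forall>x. A x = c0 + c1 * x$1 + c2 * x$2" unfolding af_def by metis
  then show "aff_on S f" unfolding aff_on_def using A(2) by (metis c)
qed

lemma phiP_Phi:
  assumes RT: "regular_triangulation \<Omega> \<T>" and CG: "\<exists>E\<subseteq>mesh_edges \<T>. closure \<Gamma>C = \<Union>E"
  shows "phiP \<T> \<Gamma>C z (Phi \<T> \<Gamma>C (\<lambda>y. if y = z then 1 else 0))"
  (is "phiP _ _ _ (Phi _ _ ?d)")
proof -
  have un: "closure \<Gamma>C = (\<Union>S\<in>half_edges \<T> \<Gamma>C. S)"
  proof
    show "closure \<Gamma>C \<subseteq> (\<Union>S\<in>half_edges \<T> \<Gamma>C. S)"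
    proof
      fix x assume x: "x \<in> closure \<Gamma>C"
      obtain a b where ab: "HR \<T> \<Gamma>C a b" "x \<in> closed_segment a (midpoint a b)" using cover[OF CG x] by blast
      have "closed_segment a (midpoint a b) \<in> half_edges \<T> \<Gamma>C" unfolding half_edges_HR using ab(1) by blast
      then show "x \<in> (\<Union>S\<in>half_edges \<T> \<Gamma>C. S)" using ab(2) by (rule UN_I)
    qed
    show "(\<Union>S\<in>half_edges \<T> \<Gamma>C. S) \<subseteq> closure \<Gamma>C"
    proof
      fix x assume "x \<in> (\<Union>S\<in>half_edges \<T> \<Gamma>C. S)"
      then obtain S where S: "S \<in> half_edges \<T> \<Gamma>C" "x \<in> S" by (rule UN_E)
      then obtain a b where ab: "HR \<T> \<Gamma>C a b" "S = closed_segment a (midpoint a b)"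
        unfolding half_edges_HR by blast
      show "x \<in> closure \<Gamma>C" using S(2) ab(2) half_sub HR_sub[OF ab(1)] by blast
    qed
  qed
  have on: "\<exists>a b. HR \<T> \<Gamma>C a b \<and> S = closed_segment a (midpoint a b) \<and>
      (\<forall>x\<in>S. Phi \<T> \<Gamma>C ?d x = interp ?d a (midpoint a b) x)" if S: "S \<in> half_edges \<T> \<Gamma>C" for S
  proof -
    obtain a b where ab: "HR \<T> \<Gamma>C a b" "S = closed_segment a (midpoint a b)"
      using S unfolding half_edges_HR by blast
    have "\<forall>x\<in>S. Phi \<T> \<Gamma>C ?d x = interp ?d a (midpoint a b) x"
      using Phi_on[OF RT ab(1)] ab(2) by blast
    then show ?thesis using ab by blast
  qed
  have c1: "continuous_on (closure \<Gamma>C) (Phi \<T> \<Gamma>C ?d)"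
    unfolding un
  proof (rule continuous_on_closed_Union)
    show "finite (half_edges \<T> \<Gamma>C)" using half_finite[OF RT] .
    show "closed S" if S: "S \<in> half_edges \<T> \<Gamma>C" for S
    proof -
      obtain a b where "S = closed_segment a (midpoint a b)" using S unfolding half_edges_HR by blast
      then show ?thesis by simp
    qed
    show "continuous_on S (Phi \<T> \<Gamma>C ?d)" if S: "S \<in> half_edges \<T> \<Gamma>C" for S
    proof -
      obtain a b where ab: "\<forall>x\<in>S. Phi \<T> \<Gamma>C ?d x = interp ?d a (midpoint a b) x" using on[OF S] by blast
      have "continuous_on S (interp ?d a (midpoint a b))" by (rule interp_cont)
      then show ?thesis by (rule continuous_on_eq) (use ab in simp)
    qed
  qed
  have c2: "\<forall>S\<in>half_edges \<T> \<Gamma>C. aff_on S (Phi \<T> \<Gamma>C ?d)"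
  proof
    fix S assume S: "S \<in> half_edges \<T> \<Gamma>C"
    obtain a b where ab: "\<forall>x\<in>S. Phi \<T> \<Gamma>C ?d x = interp ?d a (midpoint a b) x" using on[OF S] by blast
    show "aff_on S (Phi \<T> \<Gamma>C ?d)" unfolding aff_on_af
      by (rule exI[of _ "interp ?d a (midpoint a b)"]) (simp add: interp_af ab)
  qed
  have c3: "Phi \<T> \<Gamma>C ?d y = ?d y" if y: "y \<in> contact_nodes \<T> \<Gamma>C" for y
  proof -
    have y2: "y \<in> mesh_verts \<T> \<union> mesh_mids \<T>" "y \<in> closure \<Gamma>C" using y contact_nodes_sub by blast+
    obtain a b where ab: "HR \<T> \<Gamma>C a b" "y \<in> closed_segment a (midpoint a b)" using cover[OF CG y2(2)] by blast
    have a_b: "a \<noteq> b" using ab(1) unfolding HR_def by simp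
    have am: "a \<noteq> midpoint a b" using a_b by (metis midpoint_eq_endpoint)
    have "y \<in> closed_segment a b" using ab(2) half_sub by blast
    then have "y \<in> {a, b, midpoint a b}"
      by (rule node_on_edge[OF RT HR_mesh[OF ab(1)] a_b y2(1)])
    moreover have "y \<noteq> b" using far_end[OF a_b] ab(2) by blast
    ultimately have "y = a \<or> y = midpoint a b" by blast
    then have "interp ?d a (midpoint a b) y = ?d y"
    proof
      assume "y = a" then show ?thesis by (simp add: interp_a)
    next
      assume "y = midpoint a b" then show ?thesis using interp_m[OF am] by simp
    qed
    then show ?thesis using Phi_on[OF RT ab] by simp
  qed
  have c4: "\<forall>x. x \<notin> closure \<Gamma>C \<longrightarrow> Phi \<T> \<Gamma>C ?d x = 0" unfolding Phi_def by simp
  show ?thesis unfolding phiP_def using c1 c2 c3 c4 by blast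
qed

lemma phiP_unique:
  assumes RT: "regular_triangulation \<Omega> \<T>" and CG: "\<exists>E\<subseteq>mesh_edges \<T>. closure \<Gamma>C = \<Union>E"
    and f: "phiP \<T> \<Gamma>C z f"
  shows "f = Phi \<T> \<Gamma>C (\<lambda>y. if y = z then 1 else 0)"
    (is "_ = Phi _ _ ?d")
proof
  fix x
  show "f x = Phi \<T> \<Gamma>C ?d x"
  proof (cases "x \<in> closure \<Gamma>C")
    case False
    then show ?thesis using f unfolding phiP_def Phi_def by simp
  next
    case True
    obtain a b where ab: "HR \<T> \<Gamma>C a b" "x \<in> closed_segment a (midpoint a b)" using cover[OF CG True] by blast
    have a_b: "a \<noteq> b" using ab(1) unfolding HR_def by simp
    have am: "a \<noteq> midpoint a b" using a_b by (metis midpoint_eq_endpoint)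
    have S: "closed_segment a (midpoint a b) \<in> half_edges \<T> \<Gamma>C" unfolding half_edges_HR using ab(1) by blast
    obtain A where A: "af A" "\<forall>x\<in>closed_segment a (midpoint a b). f x = A x"
      using f S unfolding phiP_def aff_on_af by blast
    have nod: "\<forall>y\<in>contact_nodes \<T> \<Gamma>C. f y = ?d y" using f unfolding phiP_def by blast
    have fa: "f a = ?d a" using nod HR_nodes[OF ab(1)] by blast
    have fm: "f (midpoint a b) = ?d (midpoint a b)" using nod HR_nodes[OF ab(1)] by blast
    obtain t where t: "x = a + t *\<^sub>R (midpoint a b - a)" using ab(2) seg_param by metis
    have "f x = A x" using A(2) ab(2) by blast
    also have "\<dots> = A a + t * (A (midpoint a b) - A a)" unfolding t by (rule af_seg[OF A(1)])
    also have "\<dots> = ?d a + t * (?d (midpoint a b) - ?d a)" using A(2) fa fm by simp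
    also have "\<dots> = interp ?d a (midpoint a b) x" unfolding t interp_seg[OF am] by simp
    also have "\<dots> = Phi \<T> \<Gamma>C ?d x" using Phi_on[OF RT ab] by simp
    finally show ?thesis .
  qed
qed

lemma phi_props:
  assumes RT: "regular_triangulation \<Omega> \<T>" and CG: "\<exists>E\<subseteq>mesh_edges \<T>. closure \<Gamma>C = \<Union>E"
  shows "phiP \<T> \<Gamma>C z (phi \<T> \<Gamma>C z)"
proof -
  have "\<exists>!f. phiP \<T> \<Gamma>C z f" using phiP_Phi[OF RT CG] phiP_unique[OF RT CG] by blast
  then show ?thesis unfolding phi_eq by (rule theI')
qed

lemma e1_comp: "axis (1::2) (1::real) $ 1 = 1" "axis (1::2) (1::real) $ 2 = 0"
  by (simp_all add: axis_def)

lemma Dv_scale: "Dv (\<lambda>x. t *\<^sub>R f x) x h = t *\<^sub>R Dv f x h"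
proof (cases "t = 0")
  case True
  have "((\<lambda>x. 0::pt) has_derivative (\<lambda>h. 0)) (at x)" by (rule has_derivative_const)
  then have "frechet_derivative (\<lambda>x. 0::pt) (at x) = (\<lambda>h. 0)" using frechet_derivative_at by metis
  moreover have "(\<lambda>x. 0::pt) differentiable (at x)" by simp
  ultimately show ?thesis using True unfolding Dv_def by simp
next
  case False
  show ?thesis
  proof (cases "f differentiable (at x)")
    case True
    have d: "(f has_derivative frechet_derivative f (at x)) (at x)" using True frechet_derivative_works by blast
    have d2: "((\<lambda>x. t *\<^sub>R f x) has_derivative (\<lambda>h. t *\<^sub>R frechet_derivative f (at x) h)) (at x)"
      by (rule has_derivative_scaleR_right[OF d])
    then have "frechet_derivative (\<lambda>x. t *\<^sub>R f x) (at x) = (\<lambda>h. t *\<^sub>R frechet_derivative f (at x) h)"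
      using frechet_derivative_at by metis
    moreover have "(\<lambda>x. t *\<^sub>R f x) differentiable (at x)" using d2 differentiable_def by blast
    ultimately show ?thesis using True unfolding Dv_def by simp
  next
    case nd: False
    have "\<not> (\<lambda>x. t *\<^sub>R f x) differentiable (at x)"
    proof
      assume "(\<lambda>x. t *\<^sub>R f x) differentiable (at x)"
      then obtain g' where "((\<lambda>x. t *\<^sub>R f x) has_derivative g') (at x)" unfolding differentiable_def by blast
      then have "((\<lambda>x. (1/t) *\<^sub>R (t *\<^sub>R f x)) has_derivative (\<lambda>h. (1/t) *\<^sub>R g' h)) (at x)"
        by (rule has_derivative_scaleR_right)
      then have "f differentiable (at x)" using False unfolding differentiable_def by auto
      then show False using nd by simp
    qed
    then show ?thesis using nd unfolding Dv_def by simp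
  qed
qed

lemma strain_scale: "strain (\<lambda>x. t *\<^sub>R f x) i j x = t * strain f i j x"
  unfolding strain_def pd_def Dv_scale by (simp add: algebra_simps)

lemma aform_scale: "aform \<Omega> chi mu u (\<lambda>x. t *\<^sub>R w x) = t * aform \<Omega> chi mu u w"
proof -
  have "(\<lambda>x. \<Sum>i\<in>UNIV. \<Sum>j\<in>UNIV. stress chi mu u i j x * strain (\<lambda>x. t *\<^sub>R w x) i j x) =
      (\<lambda>x. t * (\<Sum>i\<in>UNIV. \<Sum>j\<in>UNIV. stress chi mu u i j x * strain w i j x))"
    unfolding strain_scale by (simp add: sum_distrib_left algebra_simps)
  then show ?thesis unfolding aform_def by simp
qed

lemma line_int_scale: "line_int \<Omega> \<T> S (\<lambda>x. t * h x) = t * line_int \<Omega> \<T> S h"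
proof -
  have "edge_int e (\<lambda>x. indicator S x * (t * h x)) = t * edge_int e (\<lambda>x. indicator S x * h x)" for e
  proof -
    have "(\<lambda>s. indicator S (edge_param e s) * (t * h (edge_param e s))) =
        (\<lambda>s. t * (indicator S (edge_param e s) * h (edge_param e s)))" by (simp add: algebra_simps)
    then show ?thesis unfolding edge_int_def by simp
  qed
  then show ?thesis unfolding line_int_def by (simp add: sum_distrib_left)
qed

lemma Lform_scale: "Lform \<Omega> \<T> \<Gamma>N f g (\<lambda>x. t *\<^sub>R w x) = t * Lform \<Omega> \<T> \<Gamma>N f g w"
proof -
  have "(\<lambda>x. f x \<bullet> (t *\<^sub>R w x)) = (\<lambda>x. t * (f x \<bullet> w x))" by simp
  moreover have "line_int \<Omega> \<T> \<Gamma>N (\<lambda>x. g x \<bullet> (t *\<^sub>R w x)) = t * line_int \<Omega> \<T> \<Gamma>N (\<lambda>x. g x \<bullet> w x)"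
    using line_int_scale[of \<Omega> \<T> \<Gamma>N t "\<lambda>x. g x \<bullet> w x"] by simp
  ultimately show ?thesis unfolding Lform_def by (simp add: algebra_simps)
qed

lemma setting_RT: "setting \<Omega> \<T> \<Gamma>D \<Gamma>N \<Gamma>C \<Longrightarrow> regular_triangulation \<Omega> \<T>"
  unfolding setting_def by (elim conjE)
lemma setting_disj: "setting \<Omega> \<T> \<Gamma>D \<Gamma>N \<Gamma>C \<Longrightarrow> closure \<Gamma>C \<subseteq> frontier \<Omega> - closure \<Gamma>D"
  unfolding setting_def by (elim conjE)
lemma setting_DG: "setting \<Omega> \<T> \<Gamma>D \<Gamma>N \<Gamma>C \<Longrightarrow> \<exists>E\<subseteq>mesh_edges \<T>. closure \<Gamma>D = \<Union>E"
  unfolding setting_def by (elim conjE)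
lemma setting_CG: "setting \<Omega> \<T> \<Gamma>D \<Gamma>N \<Gamma>C \<Longrightarrow> \<exists>E\<subseteq>mesh_edges \<T>. closure \<Gamma>C = \<Union>E"
  unfolding setting_def by (elim conjE)

lemma CN_finite:
  assumes RT: "regular_triangulation \<Omega> \<T>" shows "finite (contact_nodes \<T> \<Gamma>C)"
proof -
  have "contact_nodes \<T> \<Gamma>C \<subseteq> mesh_verts \<T> \<union> (\<lambda>(a, b). midpoint a b) ` (mesh_verts \<T> \<times> mesh_verts \<T>)"
  proof
    fix y assume "y \<in> contact_nodes \<T> \<Gamma>C"
    then consider "y \<in> mesh_verts \<T> \<inter> closure \<Gamma>C" | a b where "y = midpoint a b" "HR \<T> \<Gamma>C a b"
      unfolding contact_nodes_def HR_def by blast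
    then show "y \<in> mesh_verts \<T> \<union> (\<lambda>(a, b). midpoint a b) ` (mesh_verts \<T> \<times> mesh_verts \<T>)"
    proof cases
      case 1 then show ?thesis by blast
    next
      case 2 then show ?thesis using HR_verts[OF 2(2)] by force
    qed
  qed
  moreover have "finite (mesh_verts \<T> \<union> (\<lambda>(a, b). midpoint a b) ` (mesh_verts \<T> \<times> mesh_verts \<T>))"
    using mesh_verts_finite[OF RT] by simp
  ultimately show ?thesis using finite_subset by blast
qed

lemma psi_zero_D:
  assumes RT: "regular_triangulation \<Omega> \<T>" and DG: "\<exists>E\<subseteq>mesh_edges \<T>. closure \<Gamma>D = \<Union>E"
    and PS: "psiP \<Omega> \<T> p \<psi>" and pD: "p \<notin> closure \<Gamma>D" and x: "x \<in> \<Gamma>D"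
  shows "\<psi> x = 0"
proof -
  obtain E where E: "E \<subseteq> mesh_edges \<T>" "closure \<Gamma>D = \<Union>E" using DG by blast
  have "x \<in> closure \<Gamma>D" using x closure_subset by blast
  then obtain e where e: "e \<in> E" "x \<in> e" using E(2) by blast
  have em: "e \<in> mesh_edges \<T>" using e(1) E(1) by blast
  then obtain T where T: "T \<in> \<T>" "e \<in> tri_edges T" unfolding mesh_edges_def by (rule UN_E)
  obtain a b where ab: "a \<in> tri_verts T" "b \<in> tri_verts T" "a \<noteq> b" "e = closed_segment a b"
    using T(2) unfolding tri_edges_def mem_Collect_eq by metis
  have eD: "e \<subseteq> closure \<Gamma>D" using e(1) E(2) by blast
  obtain Q where Q: "qp Q" "\<forall>x\<in>T. \<psi> x = Q x" using PS T(1) unfolding psiP_def quad_on_qp by blast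
  have nod: "\<forall>y\<in>mesh_verts \<T> \<union> mesh_mids \<T>. \<psi> y = (if y = p then 1 else 0)"
    using PS unfolding psiP_def by blast
  have sT: "closed_segment a b \<subseteq> T" by (rule seg_sub_tri[OF RT T(1) ab(1,2)])
  have av: "a \<in> mesh_verts \<T>" "b \<in> mesh_verts \<T>" using T(1) ab(1,2) unfolding mesh_verts_def by blast+
  have mm: "midpoint a b \<in> mesh_mids \<T>" unfolding mesh_mids_def using em ab(3,4) by blast
  have np: "a \<noteq> p" "b \<noteq> p" "midpoint a b \<noteq> p" using eD ab(4) pD by auto
  have inT: "a \<in> T" "b \<in> T" using sT by auto
  have "\<psi> a = 0" using nod av(1) np(1) by simp
  then have Qa: "Q a = 0" using Q(2) inT(1) by simp
  have "\<psi> b = 0" using nod av(2) np(2) by simp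
  then have Qb: "Q b = 0" using Q(2) inT(2) by simp
  have "\<psi> (midpoint a b) = 0" using nod mm np(3) by simp
  moreover have "midpoint a b \<in> T" using sT midpoint_in_closed_segment by blast
  ultimately have Qm: "Q (midpoint a b) = 0" using Q(2) by simp
  have "Q x = 0" by (rule qp_seg_zero[OF Q(1) Qa Qb Qm]) (use e(2) ab(4) in simp)
  then show ?thesis using Q(2) sT e(2) ab(4) by auto
qed

theorem lemma4p3:
  fixes \<Omega> \<Gamma>D \<Gamma>N \<Gamma>C :: "pt set" and \<T> :: "pt set set"
    and chi mu :: real and f g u lam :: "pt \<Rightarrow> pt" and p :: pt
  assumes "setting \<Omega> \<T> \<Gamma>D \<Gamma>N \<Gamma>C"
    and "chi > 0" and "mu > 0"
    and "L2_dom \<Omega> f" and "L2_bdry \<Omega> \<T> \<Gamma>N g"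
    and "Kh \<Omega> \<T> \<Gamma>D \<Gamma>C u"
    and "\<forall>v. Kh \<Omega> \<T> \<Gamma>D \<Gamma>C v \<longrightarrow>
           aform \<Omega> chi mu u (\<lambda>x. v x - u x) \<ge> Lform \<Omega> \<T> \<Gamma>N f g (\<lambda>x. v x - u x)"
    and "Qh \<T> \<Gamma>C lam"
    and "\<forall>v. Qh \<T> \<Gamma>C v \<longrightarrow>
           dpair \<Omega> \<T> \<Gamma>C lam v = Lform \<Omega> \<T> \<Gamma>N f g (pi_h \<Omega> \<T> \<Gamma>C v) - aform \<Omega> chi mu u (pi_h \<Omega> \<T> \<Gamma>C v)"
    and "p \<in> contact_nodes \<T> \<Gamma>C"
    and "u p $ 1 \<noteq> 0"
  shows "dpair \<Omega> \<T> \<Gamma>C lam (\<lambda>x. phi \<T> \<Gamma>C p x *\<^sub>R axis 1 1) = 0"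
proof -
  note st = setting_RT[OF assms(1)] setting_disj[OF assms(1)] setting_DG[OF assms(1)] setting_CG[OF assms(1)]
  note RT = st(1)
  define \<psi> where "\<psi> = psi \<Omega> \<T> p"
  define \<phi> where "\<phi> = phi \<T> \<Gamma>C p"
  define e1 where "e1 = (axis 1 1 :: pt)"
  define w where "w = (\<lambda>x. \<psi> x *\<^sub>R e1)"
  have e1c: "e1 $ 1 = 1" "e1 $ 2 = 0" unfolding e1_def using e1_comp by simp_all
  have PS: "psiP \<Omega> \<T> p \<psi>" unfolding \<psi>_def by (rule psi_props[OF RT])
  have PH: "phiP \<T> \<Gamma>C p \<phi>" unfolding \<phi>_def by (rule phi_props[OF RT st(4)])
  have pCN: "p \<in> contact_nodes \<T> \<Gamma>C" using assms(10) .
  have psi_nod: "\<forall>y\<in>mesh_verts \<T> \<union> mesh_mids \<T>. \<psi> y = (if y = p then 1 else 0)"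
    using PS unfolding psiP_def by blast
  have phi_nod: "\<forall>y\<in>contact_nodes \<T> \<Gamma>C. \<phi> y = (if y = p then 1 else 0)"
    using PH unfolding phiP_def by blast
  have finCN: "finite (contact_nodes \<T> \<Gamma>C)" by (rule CN_finite[OF RT])
  have Vu: "Vh \<Omega> \<T> \<Gamma>D u" and Ku: "\<forall>z\<in>contact_nodes \<T> \<Gamma>C. u z $ 1 \<le> 0"
    using assms(6) unfolding Kh_def by blast+
  have Q: "Qh \<T> \<Gamma>C (\<lambda>x. \<phi> x *\<^sub>R (axis 1 1 :: pt))"
    unfolding Qh_def
  proof (intro conjI ballI allI)
    have cf: "continuous_on (closure \<Gamma>C) \<phi>" using PH unfolding phiP_def by blast
    show "continuous_on (closure \<Gamma>C) (\<lambda>x. \<phi> x *\<^sub>R (axis 1 1 :: pt))"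
      by (intro continuous_intros cf)
  next
    fix S i assume S: "S \<in> half_edges \<T> \<Gamma>C"
    obtain A where A: "af A" "\<forall>x\<in>S. \<phi> x = A x" using PH S unfolding phiP_def aff_on_af by blast
    show "aff_on S (\<lambda>x. (\<phi> x *\<^sub>R (axis 1 1 :: pt)) $ i)" unfolding aff_on_af
      by (rule exI[of _ "\<lambda>x. (axis 1 1 $ i) * A x"]) (simp add: af_cmul A)
  qed
  have pi: "pi_h \<Omega> \<T> \<Gamma>C (\<lambda>x. \<phi> x *\<^sub>R (axis 1 1 :: pt)) = w"
  proof
    fix x
    have "(\<Sum>i\<in>UNIV. ((\<phi> z *\<^sub>R (axis 1 1 :: pt)) $ i * psi \<Omega> \<T> z x) *\<^sub>R axis i 1) = (if z = p then w x else 0)"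
      if z: "z \<in> contact_nodes \<T> \<Gamma>C" for z
    proof (cases "z = p")
      case True
      then show ?thesis using phi_nod z unfolding w_def \<psi>_def e1_def by (simp add: sum_2 e1_comp)
    next
      case False
      then show ?thesis using phi_nod z by simp
    qed
    then have "pi_h \<Omega> \<T> \<Gamma>C (\<lambda>x. \<phi> x *\<^sub>R (axis 1 1 :: pt)) x = (\<Sum>z\<in>contact_nodes \<T> \<Gamma>C. if z = p then w x else 0)"
      unfolding pi_h_def by (rule sum.cong[OF refl])
    also have "\<dots> = w x" using finCN pCN by simp
    finally show "pi_h \<Omega> \<T> \<Gamma>C (\<lambda>x. \<phi> x *\<^sub>R (axis 1 1 :: pt)) x = w x" .
  qed
  have pD: "p \<notin> closure \<Gamma>D" using pCN contact_nodes_sub st(2) by blast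
  have zD: "\<psi> x = 0" if "x \<in> \<Gamma>D" for x by (rule psi_zero_D[OF RT st(3) PS pD that])
  define \<epsilon> where "\<epsilon> = - (u p $ 1)"
  have eps: "\<epsilon> > 0" using Ku pCN assms(11) unfolding \<epsilon>_def by force
  have K: "Kh \<Omega> \<T> \<Gamma>D \<Gamma>C (\<lambda>x. u x + t *\<^sub>R w x)" if t: "t \<le> \<epsilon>" for t
    unfolding Kh_def Vh_def
  proof (intro conjI ballI allI)
    have cu: "continuous_on (closure \<Omega>) u" using Vu unfolding Vh_def by blast
    have cp: "continuous_on (closure \<Omega>) \<psi>" using PS unfolding psiP_def by blast
    show "continuous_on (closure \<Omega>) (\<lambda>x. u x + t *\<^sub>R w x)" unfolding w_def
      by (intro continuous_intros cu cp)
  next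
    fix T i assume T: "T \<in> \<T>"
    have "quad_on T (\<lambda>x. u x $ i)" using Vu T unfolding Vh_def by blast
    then obtain P where P: "qp P" "\<forall>x\<in>T. u x $ i = P x" unfolding quad_on_qp by blast
    obtain Q where Q: "qp Q" "\<forall>x\<in>T. \<psi> x = Q x" using PS T unfolding psiP_def quad_on_qp by blast
    have "qp (\<lambda>x. P x + (t * e1 $ i) * Q x)" by (intro qp_add qp_cmul P(1) Q(1))
    moreover have "\<forall>x\<in>T. (u x + t *\<^sub>R w x) $ i = P x + (t * e1 $ i) * Q x"
      using P(2) Q(2) unfolding w_def by simp
    ultimately show "quad_on T (\<lambda>x. (u x + t *\<^sub>R w x) $ i)" unfolding quad_on_qp by blast
  next
    fix x assume x: "x \<in> \<Gamma>D"
    have "u x = 0" using Vu x unfolding Vh_def by blast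
    then show "u x + t *\<^sub>R w x = 0" using zD[OF x] unfolding w_def by simp
  next
    fix z assume z: "z \<in> contact_nodes \<T> \<Gamma>C"
    have zm: "z \<in> mesh_verts \<T> \<union> mesh_mids \<T>" using z contact_nodes_sub by blast
    have "(u z + t *\<^sub>R w z) $ 1 = u z $ 1 + t * \<psi> z" unfolding w_def using e1c by simp
    also have "\<dots> \<le> 0"
    proof (cases "z = p")
      case True
      then show ?thesis using psi_nod zm t unfolding \<epsilon>_def by simp
    next
      case False
      then show ?thesis using psi_nod zm Ku z by simp
    qed
    finally show "(u z + t *\<^sub>R w z) $ 1 \<le> 0" .
  qed
  have ineq: "t * aform \<Omega> chi mu u w \<ge> t * Lform \<Omega> \<T> \<Gamma>N f g w" if t: "t \<le> \<epsilon>" for t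
  proof -
    have "aform \<Omega> chi mu u (\<lambda>x. (u x + t *\<^sub>R w x) - u x) \<ge> Lform \<Omega> \<T> \<Gamma>N f g (\<lambda>x. (u x + t *\<^sub>R w x) - u x)"
      using assms(7) K[OF t] by blast
    moreover have "(\<lambda>x. (u x + t *\<^sub>R w x) - u x) = (\<lambda>x. t *\<^sub>R w x)" by simp
    ultimately show ?thesis by (simp add: aform_scale Lform_scale)
  qed
  have i1: "\<epsilon> * aform \<Omega> chi mu u w \<ge> \<epsilon> * Lform \<Omega> \<T> \<Gamma>N f g w" using ineq[of \<epsilon>] by simp
  have i2: "(- \<epsilon>) * aform \<Omega> chi mu u w \<ge> (- \<epsilon>) * Lform \<Omega> \<T> \<Gamma>N f g w" using ineq[of "- \<epsilon>"] eps by simp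
  have "aform \<Omega> chi mu u w \<ge> Lform \<Omega> \<T> \<Gamma>N f g w" using i1 eps by simp
  moreover have "aform \<Omega> chi mu u w \<le> Lform \<Omega> \<T> \<Gamma>N f g w" using i2 eps by simp
  ultimately have eq: "aform \<Omega> chi mu u w = Lform \<Omega> \<T> \<Gamma>N f g w" by linarith
  have "dpair \<Omega> \<T> \<Gamma>C lam (\<lambda>x. \<phi> x *\<^sub>R (axis 1 1 :: pt)) =
      Lform \<Omega> \<T> \<Gamma>N f g (pi_h \<Omega> \<T> \<Gamma>C (\<lambda>x. \<phi> x *\<^sub>R (axis 1 1 :: pt))) - aform \<Omega> chi mu u (pi_h \<Omega> \<T> \<Gamma>C (\<lambda>x. \<phi> x *\<^sub>R (axis 1 1 :: pt)))"
    using assms(9) Q by blast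
  also have "\<dots> = 0" unfolding pi using eq by simp
  finally show ?thesis unfolding \<phi>_def .
qed

end
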